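(* Let $\mathbf{H}$ be a fourth-order harmonic tensor on $\mathbb{R}^3$ (totally symmetric and traceless) which is cubic. Consider the linear equation \[ \operatorname{tr}(\mathbf{H}\times \mathbf{a}) = 0 \] in the unknown second-order symmetric tensor $\mathbf{a}$, where in any direct orthonormal basis \[ (\operatorname{tr}(\mathbf{H}\times\mathbf{a}))_{ijk} = \frac{1}{10}\left(\varepsilon_{ipq}H_{jkpr}+\varepsilon_{jpq}H_{ikpr}+\varepsilon_{kpq}H_{ijpr}\right)a_{qr}. \] Then the set of solutions $\mathbf{a}$ is a three-dimensional vector space. Moreover, the orthotropic tensors among these solutions form a dense open subset of this solution space, and for any orthotropic solution $\mathbf{a}$, every natural basis of $\mathbf{a}$ is a natural basis for $\mathbf{H}$.
   Context: $\mathrm{SO}(3)$ acts on tensors by $(g\star\mathbf{T})_{i_1\dots i_n}=g_{i_1j_1}\cdots g_{i_nj_n}T_{j_1\dots j_n}$. $\varepsilon_{ijk}$ is the Levi-Civita tensor, $\varepsilon_{ijk}=\det(\mathbf{e}_i,\mathbf{e}_j,\mathbf{e}_k)$ in a direct orthonormal basis. The symmetry group of a tensor is the subgroup of $\mathrm{SO}(3)$ fixing it. A fourth-order tensor $\mathbf{H}$ is called cubic if its symmetry group is conjugate in $\mathrm{SO}(3)$ to the octahedral group (the orientation-preserving symmetry group of the cube with vertices $(\pm1,\pm1,\pm1)$). A natural basis for a cubic $\mathbf{H}$ is a direct orthonormal basis $(\mathbf{u}_1,\mathbf{u}_2,\mathbf{u}_3)$ such that the symmetry group of $\mathbf{H}$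 is exactly the group of orientation-preserving symmetries of the cube with vertices $\pm\mathbf{u}_1\pm\mathbf{u}_2\pm\mathbf{u}_3$ (equivalently, the components of $\mathbf{H}$ in that basis are of cubic normal form, all components vanishing except those of type $H_{iiii}$, $H_{iijj}$, $H_{ijij}$, with $H_{1111}=H_{2222}=H_{3333}$ and $H_{1122}=H_{1133}=H_{2233}=H_{1212}=H_{1313}=H_{2323}$). A second-order symmetric tensor is orthotropic if it has three distinct eigenvalues; a natural basis for such a tensor is a direct orthonormal basis of its eigenvectors. *)

theory Defs
  imports "HOL-Analysis.Analysis"
begin

text \<open>Vectors of R^3 are real^3; indices range over the type 3.
  Fourth-order tensors are functions of four indices (components in the
  canonical direct orthonormal basis); second-order tensors are 3x3 matrices.\<close>

type_synonym tensor4 = "3 \<Rightarrow> 3 \<Rightarrow> 3 \<Rightarrow> 3 \<Rightarrow> real"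
type_synonym tensor3 = "3 \<Rightarrow> 3 \<Rightarrow> 3 \<Rightarrow> real"

definition SO3 :: "(real^3^3) set" where
  "SO3 = {g. orthogonal_matrix g \<and> det g = 1}"

definition act4 :: "real^3^3 \<Rightarrow> tensor4 \<Rightarrow> tensor4" where
  "act4 g T = (\<lambda>i1 i2 i3 i4. \<Sum>j1\<in>UNIV. \<Sum>j2\<in>UNIV. \<Sum>j3\<in>UNIV. \<Sum>j4\<in>UNIV.
      g$i1$j1 * g$i2$j2 * g$i3$j3 * g$i4$j4 * T j1 j2 j3 j4)"

definition sym_group4 :: "tensor4 \<Rightarrow> (real^3^3) set" where
  "sym_group4 T = {g \<in> SO3. act4 g T = T}"

text \<open>Levi-Civita: eps i j k = det(e_i, e_j, e_k).\<close>
definition eps :: "3 \<Rightarrow> 3 \<Rightarrow> 3 \<Rightarrow> real" where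
  "eps i j k = det (vector [axis i 1, axis j 1, axis k 1] :: real^3^3)"

definition totally_symmetric4 :: "tensor4 \<Rightarrow> bool" where
  "totally_symmetric4 H \<longleftrightarrow> (\<forall>i j k l.
     H i j k l = H j i k l \<and> H i j k l = H i k j l \<and> H i j k l = H i j l k)"

definition traceless4 :: "tensor4 \<Rightarrow> bool" where
  "traceless4 H \<longleftrightarrow> (\<forall>k l. (\<Sum>i\<in>UNIV. H i i k l) = 0)"

definition harmonic4 :: "tensor4 \<Rightarrow> bool" where
  "harmonic4 H \<longleftrightarrow> totally_symmetric4 H \<and> traceless4 H"

text \<open>Vertices of the cube spanned by a basis u.\<close>
definition cube_vertices :: "(3 \<Rightarrow> real^3) \<Rightarrow> (real^3) set" where
  "cube_vertices u = {v. \<exists>s::3 \<Rightarrow> real. (\<forall>i. s i = 1 \<or> s i = -1) \<and> v = (\<Sum>i\<in>UNIV. s i *\<^sub>R u i)}"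

text \<open>Orientation-preserving symmetry group of the cube with vertices given by u.\<close>
definition cube_rot_group :: "(3 \<Rightarrow> real^3) \<Rightarrow> (real^3^3) set" where
  "cube_rot_group u = {g \<in> SO3. (\<lambda>x. g *v x) ` cube_vertices u = cube_vertices u}"

definition std_basis :: "3 \<Rightarrow> real^3" where
  "std_basis i = axis i 1"

text \<open>Octahedral group: rotations of the cube with vertices (+-1,+-1,+-1).\<close>
definition octahedral :: "(real^3^3) set" where
  "octahedral = cube_rot_group std_basis"

definition cubic4 :: "tensor4 \<Rightarrow> bool" where
  "cubic4 H \<longleftrightarrow> (\<exists>g\<in>SO3. sym_group4 H = (\<lambda>h. g ** h ** transpose g) ` octahedral)"

definition direct_orthonormal_basis :: "(3 \<Rightarrow> real^3) \<Rightarrow> bool" where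
  "direct_orthonormal_basis u \<longleftrightarrow>
     (\<forall>i j. u i \<bullet> u j = (if i = j then 1 else 0)) \<and>
     det (vector [u 1, u 2, u 3] :: real^3^3) = 1"

definition natural_basis4 :: "tensor4 \<Rightarrow> (3 \<Rightarrow> real^3) \<Rightarrow> bool" where
  "natural_basis4 H u \<longleftrightarrow> direct_orthonormal_basis u \<and> sym_group4 H = cube_rot_group u"

definition is_eigenvalue :: "real^3^3 \<Rightarrow> real \<Rightarrow> bool" where
  "is_eigenvalue a c \<longleftrightarrow> (\<exists>v. v \<noteq> 0 \<and> a *v v = c *\<^sub>R v)"

definition orthotropic2 :: "real^3^3 \<Rightarrow> bool" where
  "orthotropic2 a \<longleftrightarrow> transpose a = a \<and> card {c. is_eigenvalue a c} = 3"

definition natural_basis2 :: "real^3^3 \<Rightarrow> (3 \<Rightarrow> real^3) \<Rightarrow> bool" where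
  "natural_basis2 a u \<longleftrightarrow> direct_orthonormal_basis u \<and>
     (\<forall>i. \<exists>c. a *v u i = c *\<^sub>R u i)"

text \<open>tr(H x a), in the canonical basis.\<close>
definition trHxa :: "tensor4 \<Rightarrow> real^3^3 \<Rightarrow> tensor3" where
  "trHxa H a = (\<lambda>i j k. (1/10) * (\<Sum>p\<in>UNIV. \<Sum>q\<in>UNIV. \<Sum>r\<in>UNIV.
      (eps i p q * H j k p r + eps j p q * H i k p r + eps k p q * H i j p r) * a$q$r))"

end

theory Submission
  imports Defs
begin

(* from P4.thy *)

lemma orth_col:
  assumes "orthogonal_matrix (g::real^3^3)"
  shows "(\<Sum>p\<in>UNIV. g$p$a * g$p$b) = (if a = b then 1 else 0)"
proof -
  have "transpose g ** g = mat 1" using assms by (simp add: orthogonal_matrix_def)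
  then have "(transpose g ** g)$a$b = (mat 1 :: real^3^3)$a$b" by simp
  then show ?thesis by (simp add: matrix_matrix_mult_def transpose_def mat_def)
qed

lemma orth_row:
  assumes "orthogonal_matrix (g::real^3^3)"
  shows "(\<Sum>p\<in>UNIV. g$a$p * g$b$p) = (if a = b then 1 else 0)"
proof -
  have "g ** transpose g = mat 1" using assms by (simp add: orthogonal_matrix_def)
  then have "(g ** transpose g)$a$b = (mat 1 :: real^3^3)$a$b" by simp
  then show ?thesis by (simp add: matrix_matrix_mult_def transpose_def mat_def)
qed

lemma swap_in: "(\<Sum>i\<in>A. \<Sum>a\<in>B. \<Sum>b\<in>C. f i a b) = (\<Sum>a\<in>B. \<Sum>b\<in>C. \<Sum>i\<in>A. f i a b)"
proof -
  have "(\<Sum>i\<in>A. \<Sum>a\<in>B. \<Sum>b\<in>C. f i a b) = (\<Sum>a\<in>B. \<Sum>i\<in>A. \<Sum>b\<in>C. f i a b)"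
    by (rule sum.swap)
  also have "\<dots> = (\<Sum>a\<in>B. \<Sum>b\<in>C. \<Sum>i\<in>A. f i a b)"
    by (rule sum.cong[OF refl], rule sum.swap)
  finally show ?thesis .
qed

lemma delta_mult: "(if a = b then 1 else 0) * (x::real) = (if a = b then x else 0)" by simp

lemma orth_contract:
  assumes "orthogonal_matrix (g::real^3^3)"
  shows "(\<Sum>i\<in>UNIV. \<Sum>a\<in>UNIV. g$i$a * (\<Sum>b\<in>UNIV. g$i$b * F a b)) = (\<Sum>a\<in>UNIV. F a a)"
proof -
  have "(\<Sum>i\<in>UNIV. \<Sum>a\<in>UNIV. g$i$a * (\<Sum>b\<in>UNIV. g$i$b * F a b))
     = (\<Sum>i\<in>UNIV. \<Sum>a\<in>UNIV. \<Sum>b\<in>UNIV. g$i$a * g$i$b * F a b)"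
    by (simp add: sum_distrib_left mult.assoc)
  also have "\<dots> = (\<Sum>a\<in>UNIV. \<Sum>b\<in>UNIV. \<Sum>i\<in>UNIV. g$i$a * g$i$b * F a b)"
    by (rule swap_in)
  also have "\<dots> = (\<Sum>a\<in>UNIV. \<Sum>b\<in>UNIV. (\<Sum>i\<in>UNIV. g$i$a * g$i$b) * F a b)"
    by (simp add: sum_distrib_right)
  also have "\<dots> = (\<Sum>a\<in>UNIV. F a a)"
    by (simp add: orth_col[OF assms] delta_mult sum.delta)
  finally show ?thesis .
qed

lemma dot_rot:
  assumes "orthogonal_matrix (g::real^3^3)"
  shows "(\<Sum>p\<in>UNIV. (\<Sum>b\<in>UNIV. g$p$b * U b) * (\<Sum>c\<in>UNIV. g$p$c * V c)) = (\<Sum>b\<in>UNIV. U b * V b)"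
proof -
  have "(\<Sum>p\<in>UNIV. (\<Sum>b\<in>UNIV. g$p$b * U b) * (\<Sum>c\<in>UNIV. g$p$c * V c))
    = (\<Sum>p\<in>UNIV. \<Sum>b\<in>UNIV. g$p$b * (\<Sum>c\<in>UNIV. g$p$c * (U b * V c)))"
    unfolding sum_product by (simp only: sum_distrib_left mult_ac)
  also have "\<dots> = (\<Sum>b\<in>UNIV. U b * V b)" by (rule orth_contract[OF assms])
  finally show ?thesis .
qed

lemma key1:
  assumes "orthogonal_matrix (g::real^3^3)"
  shows "(\<Sum>p\<in>UNIV. \<Sum>q\<in>UNIV. \<Sum>r\<in>UNIV. (\<Sum>b\<in>UNIV. g$p$b * X b q) * (\<Sum>j\<in>UNIV. g$p$j * Y j r) * W q r)
    = (\<Sum>b\<in>UNIV. \<Sum>r\<in>UNIV. Y b r * (\<Sum>q\<in>UNIV. X b q * W q r))"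
proof -
  have "(\<Sum>p\<in>UNIV. \<Sum>q\<in>UNIV. \<Sum>r\<in>UNIV. (\<Sum>b\<in>UNIV. g$p$b * X b q) * (\<Sum>j\<in>UNIV. g$p$j * Y j r) * W q r)
    = (\<Sum>q\<in>UNIV. \<Sum>r\<in>UNIV. \<Sum>p\<in>UNIV. (\<Sum>b\<in>UNIV. g$p$b * X b q) * (\<Sum>j\<in>UNIV. g$p$j * Y j r) * W q r)"
    by (rule swap_in)
  also have "\<dots> = (\<Sum>q\<in>UNIV. \<Sum>r\<in>UNIV. (\<Sum>p\<in>UNIV. (\<Sum>b\<in>UNIV. g$p$b * X b q) * (\<Sum>j\<in>UNIV. g$p$j * Y j r)) * W q r)"
    by (simp only: sum_distrib_right)
  also have "\<dots> = (\<Sum>q\<in>UNIV. \<Sum>r\<in>UNIV. (\<Sum>b\<in>UNIV. X b q * Y b r) * W q r)"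
    by (simp only: dot_rot[OF assms])
  also have "\<dots> = (\<Sum>q\<in>UNIV. \<Sum>r\<in>UNIV. \<Sum>b\<in>UNIV. X b q * Y b r * W q r)"
    by (simp only: sum_distrib_right)
  also have "\<dots> = (\<Sum>r\<in>UNIV. \<Sum>b\<in>UNIV. \<Sum>q\<in>UNIV. X b q * Y b r * W q r)"
    by (rule swap_in)
  also have "\<dots> = (\<Sum>b\<in>UNIV. \<Sum>r\<in>UNIV. \<Sum>q\<in>UNIV. X b q * Y b r * W q r)"
    by (rule sum.swap)
  also have "\<dots> = (\<Sum>b\<in>UNIV. \<Sum>r\<in>UNIV. Y b r * (\<Sum>q\<in>UNIV. X b q * W q r))"
    by (simp only: sum_distrib_left mult_ac)
  finally show ?thesis .
qed

lemma aux_dist: "(x::real) * (\<Sum>c\<in>A. f c * y c) = (\<Sum>c\<in>A. f c * (x * y c))"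
  by (simp add: sum_distrib_left mult_ac)

lemma key:
  assumes "orthogonal_matrix (g::real^3^3)"
  shows "(\<Sum>p\<in>UNIV. \<Sum>q\<in>UNIV. \<Sum>r\<in>UNIV.
     (\<Sum>b\<in>UNIV. g$p$b * (\<Sum>c\<in>UNIV. g$q$c * Z b c)) *
     (\<Sum>j\<in>UNIV. g$p$j * (\<Sum>j4\<in>UNIV. g$r$j4 * M j j4)) *
     (\<Sum>s\<in>UNIV. g$q$s * (\<Sum>t\<in>UNIV. g$r$t * B s t)))
   = (\<Sum>b\<in>UNIV. \<Sum>c\<in>UNIV. Z b c * (\<Sum>j4\<in>UNIV. M b j4 * B c j4))"
proof -
  have "?thesis \<longleftrightarrow> (\<Sum>b\<in>UNIV. \<Sum>r\<in>UNIV. (\<Sum>j4\<in>UNIV. g$r$j4 * M b j4) *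
      (\<Sum>q\<in>UNIV. (\<Sum>c\<in>UNIV. g$q$c * Z b c) * (\<Sum>s\<in>UNIV. g$q$s * (\<Sum>t\<in>UNIV. g$r$t * B s t))))
     = (\<Sum>b\<in>UNIV. \<Sum>c\<in>UNIV. Z b c * (\<Sum>j4\<in>UNIV. M b j4 * B c j4))"
    by (subst key1[OF assms]) (rule refl)
  also have "\<dots> \<longleftrightarrow> (\<Sum>b\<in>UNIV. \<Sum>r\<in>UNIV. (\<Sum>j4\<in>UNIV. g$r$j4 * M b j4) *
      (\<Sum>c\<in>UNIV. Z b c * (\<Sum>t\<in>UNIV. g$r$t * B c t)))
     = (\<Sum>b\<in>UNIV. \<Sum>c\<in>UNIV. Z b c * (\<Sum>j4\<in>UNIV. M b j4 * B c j4))"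
    by (simp only: dot_rot[OF assms])
  also have "(\<Sum>b\<in>UNIV. \<Sum>r\<in>UNIV. (\<Sum>j4\<in>UNIV. g$r$j4 * M b j4) *
      (\<Sum>c\<in>UNIV. Z b c * (\<Sum>t\<in>UNIV. g$r$t * B c t)))
    = (\<Sum>b\<in>UNIV. \<Sum>r\<in>UNIV. \<Sum>c\<in>UNIV. Z b c * ((\<Sum>j4\<in>UNIV. g$r$j4 * M b j4) * (\<Sum>t\<in>UNIV. g$r$t * B c t)))"
    by (intro sum.cong refl, rule aux_dist)
  also have "\<dots> = (\<Sum>b\<in>UNIV. \<Sum>c\<in>UNIV. \<Sum>r\<in>UNIV. Z b c * ((\<Sum>j4\<in>UNIV. g$r$j4 * M b j4) * (\<Sum>t\<in>UNIV. g$r$t * B c t)))"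
    by (rule sum.cong[OF refl], rule sum.swap)
  also have "\<dots> = (\<Sum>b\<in>UNIV. \<Sum>c\<in>UNIV. Z b c * (\<Sum>r\<in>UNIV. (\<Sum>j4\<in>UNIV. g$r$j4 * M b j4) * (\<Sum>t\<in>UNIV. g$r$t * B c t)))"
    by (simp only: sum_distrib_left)
  also have "\<dots> = (\<Sum>b\<in>UNIV. \<Sum>c\<in>UNIV. Z b c * (\<Sum>j4\<in>UNIV. M b j4 * B c j4))"
    by (simp only: dot_rot[OF assms])
  finally show ?thesis by simp
qed

lemma eps_det3: "(\<Sum>b\<in>UNIV. y$b * (\<Sum>c\<in>UNIV. z$c * (\<Sum>a\<in>UNIV. x$a * eps a b c)))
   = det (vector [x, y, z] :: real^3^3)"
  by (simp add: sum_3 eps_def det_3 vector_def axis_def algebra_simps)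

lemma if10_mult: "(if P then 1 else 0) * (x::real) = (if P then x else 0)" by simp

lemma rows_mult: "(vector [g$i, g$p, g$q] :: real^3^3) = (vector [axis i 1, axis p 1, axis q 1] :: real^3^3) ** g"
  by (simp add: vec_eq_iff matrix_matrix_mult_def vector_def forall_3 axis_def if10_mult)

lemma eps_rot:
  assumes "g \<in> SO3"
  shows "eps i p q = (\<Sum>b\<in>UNIV. g$p$b * (\<Sum>c\<in>UNIV. g$q$c * (\<Sum>a\<in>UNIV. g$i$a * eps a b c)))"
proof -
  have "(\<Sum>b\<in>UNIV. g$p$b * (\<Sum>c\<in>UNIV. g$q$c * (\<Sum>a\<in>UNIV. g$i$a * eps a b c))) = det (vector [g$i, g$p, g$q] :: real^3^3)"
    by (rule eps_det3)
  also have "\<dots> = eps i p q * det g" by (simp only: rows_mult det_mul eps_def)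
  finally show ?thesis using assms by (simp add: SO3_def)
qed

definition tau :: "tensor4 \<Rightarrow> real^3^3 \<Rightarrow> tensor3" where
  "tau H a = (\<lambda>i j k. \<Sum>p\<in>UNIV. \<Sum>q\<in>UNIV. \<Sum>r\<in>UNIV. eps i p q * H j k p r * a$q$r)"

lemma trHxa_tau: "trHxa H a i j k = (1/10) * (tau H a i j k + tau H a j i k + tau H a k i j)"
  by (simp add: trHxa_def tau_def sum.distrib algebra_simps)

lemma act4_alt: "act4 g K j k p r = (\<Sum>j3\<in>UNIV. g$p$j3 * (\<Sum>j4\<in>UNIV. g$r$j4 *
    (\<Sum>j1\<in>UNIV. g$j$j1 * (\<Sum>j2\<in>UNIV. g$k$j2 * K j1 j2 j3 j4))))"
  by (simp add: act4_def sum_3 algebra_simps)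

lemma conj_entry: "((g::real^3^3) ** b ** transpose g)$q$r = (\<Sum>s\<in>UNIV. g$q$s * (\<Sum>t\<in>UNIV. g$r$t * b$s$t))"
  by (simp add: matrix_matrix_mult_def transpose_def sum_3 algebra_simps)

lemma ro1: fixes x :: "3 \<Rightarrow> real" and e :: "3\<Rightarrow>3\<Rightarrow>3\<Rightarrow>real" and N :: "3\<Rightarrow>3\<Rightarrow>real" shows "(\<Sum>b\<in>UNIV. \<Sum>c\<in>UNIV. (\<Sum>a\<in>UNIV. x a * e a b c) * N b c)
  = (\<Sum>a\<in>UNIV. x a * (\<Sum>b\<in>UNIV. \<Sum>c\<in>UNIV. e a b c * (N b c::real)))"
  by (simp add: sum_3 algebra_simps)

lemma ro2: fixes y z :: "3 \<Rightarrow> real" and K :: "3\<Rightarrow>3\<Rightarrow>3\<Rightarrow>3\<Rightarrow>real" shows "(\<Sum>j4\<in>UNIV. (\<Sum>j1\<in>UNIV. y j1 * (\<Sum>j2\<in>UNIV. z j2 * K j1 j2 b j4)) * (B c j4::real))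
  = (\<Sum>j1\<in>UNIV. y j1 * (\<Sum>j2\<in>UNIV. z j2 * (\<Sum>j4\<in>(UNIV::3 set). K j1 j2 b j4 * B c j4)))"
  by (simp add: sum_3 algebra_simps)

lemma ro3: fixes y z :: "3 \<Rightarrow> real" and e :: "3\<Rightarrow>3\<Rightarrow>real" shows "(\<Sum>b\<in>UNIV. \<Sum>c\<in>UNIV. e b c * (\<Sum>j1\<in>UNIV. y j1 * (\<Sum>j2\<in>UNIV. z j2 * P j1 j2 b c)))
  = (\<Sum>j1\<in>UNIV. y j1 * (\<Sum>j2\<in>UNIV. z j2 * (\<Sum>b\<in>(UNIV::3 set). \<Sum>c\<in>(UNIV::3 set). e b c * (P j1 j2 b c::real))))"
  by (simp add: sum_3 algebra_simps)

lemma reorder: "(\<Sum>b\<in>UNIV. \<Sum>c\<in>UNIV. (\<Sum>a\<in>UNIV. x a * eps a b c) *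
   (\<Sum>j4\<in>UNIV. (\<Sum>j1\<in>UNIV. y j1 * (\<Sum>j2\<in>UNIV. z j2 * K j1 j2 b j4)) * B$c$j4))
  = (\<Sum>a\<in>UNIV. x a * (\<Sum>j1\<in>UNIV. y j1 * (\<Sum>j2\<in>UNIV. z j2 * tau K B a j1 j2)))"
proof -
  have "tau K B a j1 j2 = (\<Sum>b\<in>UNIV. \<Sum>c\<in>UNIV. eps a b c * (\<Sum>j4\<in>UNIV. K j1 j2 b j4 * B$c$j4))" for a j1 j2
    by (simp add: tau_def sum_distrib_left mult.assoc)
  then show ?thesis
    by (simp only: ro1 ro2[where B="\<lambda>c j4. B$c$j4"] ro3)
qed


lemma SO3_orth: "g \<in> SO3 \<Longrightarrow> orthogonal_matrix g" by (simp add: SO3_def)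

lemma tau_rot:
  assumes "g \<in> SO3"
  shows "tau (act4 g K) (g ** B ** transpose g) i j k =
    (\<Sum>a\<in>UNIV. g$i$a * (\<Sum>j1\<in>UNIV. g$j$j1 * (\<Sum>j2\<in>UNIV. g$k$j2 * tau K B a j1 j2)))"
proof -
  have o: "orthogonal_matrix g" using assms by (rule SO3_orth)
  have E: "eps i p q = (\<Sum>b\<in>UNIV. g$p$b * (\<Sum>c\<in>UNIV. g$q$c * (\<Sum>a\<in>UNIV. g$i$a * eps a b c)))" for p q
    by (rule eps_rot[OF assms])
  have "tau (act4 g K) (g ** B ** transpose g) i j k =
    (\<Sum>p\<in>UNIV. \<Sum>q\<in>UNIV. \<Sum>r\<in>UNIV. eps i p q * act4 g K j k p r * (g ** B ** transpose g)$q$r)"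
    by (simp add: tau_def)
  also have "\<dots> = (\<Sum>p\<in>UNIV. \<Sum>q\<in>UNIV. \<Sum>r\<in>UNIV.
     (\<Sum>b\<in>UNIV. g$p$b * (\<Sum>c\<in>UNIV. g$q$c * (\<Sum>a\<in>UNIV. g$i$a * eps a b c))) *
     (\<Sum>j3\<in>UNIV. g$p$j3 * (\<Sum>j4\<in>UNIV. g$r$j4 * (\<Sum>j1\<in>UNIV. g$j$j1 * (\<Sum>j2\<in>UNIV. g$k$j2 * K j1 j2 j3 j4)))) *
     (\<Sum>s\<in>UNIV. g$q$s * (\<Sum>t\<in>UNIV. g$r$t * B$s$t)))"
    by (simp only: E act4_alt conj_entry)
  also have "\<dots> = (\<Sum>b\<in>UNIV. \<Sum>c\<in>UNIV. (\<Sum>a\<in>UNIV. g$i$a * eps a b c) *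
      (\<Sum>j4\<in>UNIV. (\<Sum>j1\<in>UNIV. g$j$j1 * (\<Sum>j2\<in>UNIV. g$k$j2 * K j1 j2 b j4)) * B$c$j4))"
    by (rule key[OF o])
  also have "\<dots> = (\<Sum>a\<in>UNIV. g$i$a * (\<Sum>j1\<in>UNIV. g$j$j1 * (\<Sum>j2\<in>UNIV. g$k$j2 * tau K B a j1 j2)))"
    by (rule reorder)
  finally show ?thesis .
qed

lemma trHxa_rot:
  assumes "g \<in> SO3" and "trHxa K B = (\<lambda>i j k. 0)"
  shows "trHxa (act4 g K) (g ** B ** transpose g) = (\<lambda>i j k. 0)"
proof (intro ext)
  fix i j k
  have z: "tau K B a j1 j2 + tau K B j1 a j2 + tau K B j2 a j1 = 0" for a j1 j2
    using fun_cong[OF fun_cong[OF fun_cong[OF assms(2), of a], of j1], of j2]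
    by (simp add: trHxa_tau)
  have "tau (act4 g K) (g ** B ** transpose g) i j k + tau (act4 g K) (g ** B ** transpose g) j i k
     + tau (act4 g K) (g ** B ** transpose g) k i j =
     (\<Sum>a\<in>UNIV. g$i$a * (\<Sum>j1\<in>UNIV. g$j$j1 * (\<Sum>j2\<in>UNIV. g$k$j2 *
        (tau K B a j1 j2 + tau K B j1 a j2 + tau K B j2 a j1))))"
    unfolding tau_rot[OF assms(1)] by (simp add: sum_3 algebra_simps)
  also have "\<dots> = 0" by (simp add: z)
  finally show "trHxa (act4 g K) (g ** B ** transpose g) i j k = 0"
    by (simp add: trHxa_tau)
qed


(* from P5.thy *)


definition A1 :: "real^3^3 \<Rightarrow> tensor4 \<Rightarrow> tensor4" where
  "A1 g T = (\<lambda>a b c d. \<Sum>x\<in>UNIV. g$a$x * T x b c d)"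
definition A2 :: "real^3^3 \<Rightarrow> tensor4 \<Rightarrow> tensor4" where
  "A2 g T = (\<lambda>a b c d. \<Sum>x\<in>UNIV. g$b$x * T a x c d)"
definition A3 :: "real^3^3 \<Rightarrow> tensor4 \<Rightarrow> tensor4" where
  "A3 g T = (\<lambda>a b c d. \<Sum>x\<in>UNIV. g$c$x * T a b x d)"
definition A4 :: "real^3^3 \<Rightarrow> tensor4 \<Rightarrow> tensor4" where
  "A4 g T = (\<lambda>a b c d. \<Sum>x\<in>UNIV. g$d$x * T a b c x)"

lemma act4_A: "act4 g T = A1 g (A2 g (A3 g (A4 g T)))"
  by (simp add: act4_def A1_def A2_def A3_def A4_def sum_distrib_left mult.assoc)

lemma one_idx: fixes F :: "3 \<Rightarrow> real" shows "(\<Sum>j\<in>UNIV. (g::real^3^3)$i$j * (\<Sum>k\<in>UNIV. (h::real^3^3)$j$k * F k)) = (\<Sum>k\<in>UNIV. (g**h)$i$k * F k)"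
  by (simp add: matrix_matrix_mult_def sum_3 algebra_simps)

lemma A_comp:
  "A1 g (A1 h T) = A1 (g**h) T" "A2 g (A2 h T) = A2 (g**h) T"
  "A3 g (A3 h T) = A3 (g**h) T" "A4 g (A4 h T) = A4 (g**h) T"
  by (simp_all add: A1_def A2_def A3_def A4_def one_idx)

lemma A_comm:
  "A1 h (A2 g T) = A2 g (A1 h T)" "A1 h (A3 g T) = A3 g (A1 h T)" "A1 h (A4 g T) = A4 g (A1 h T)"
  "A2 h (A3 g T) = A3 g (A2 h T)" "A2 h (A4 g T) = A4 g (A2 h T)" "A3 h (A4 g T) = A4 g (A3 h T)"
  by (simp_all add: A1_def A2_def A3_def A4_def sum_3 algebra_simps)

lemma A_id: "A1 (mat 1) T = T" "A2 (mat 1) T = T" "A3 (mat 1) T = T" "A4 (mat 1) T = T"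
  by (simp_all add: A1_def A2_def A3_def A4_def mat_def if10_mult)

lemma act4_comp: "act4 (g ** h) T = act4 g (act4 h T)"
  by (simp only: act4_A A_comm A_comp)

lemma act4_id: "act4 (mat 1) T = T"
  by (simp only: act4_A A_id)

lemma act4_sym:
  assumes "totally_symmetric4 T"
  shows "totally_symmetric4 (act4 g T)"
proof -
  have s1: "T i j k l = T j i k l" and s2: "T i j k l = T i k j l" and s3: "T i j k l = T i j l k" for i j k l
    using assms unfolding totally_symmetric4_def by blast+
  show ?thesis unfolding totally_symmetric4_def
  proof (intro allI conjI)
    fix i j k l
    show "act4 g T i j k l = act4 g T j i k l" unfolding act4_def
      by (simp add: sum_3 s1[of 2 1] s1[of 3 1] s1[of 3 2] algebra_simps)
    show "act4 g T i j k l = act4 g T i k j l" unfolding act4_def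
      by (simp add: sum_3 s2[of _ 2 1] s2[of _ 3 1] s2[of _ 3 2] algebra_simps)
    show "act4 g T i j k l = act4 g T i j l k" unfolding act4_def
      by (simp add: sum_3 s3[of _ _ 2 1] s3[of _ _ 3 1] s3[of _ _ 3 2] algebra_simps)
  qed
qed

lemma act4_traceless:
  assumes "traceless4 T" "orthogonal_matrix g"
  shows "traceless4 (act4 g T)"
  unfolding traceless4_def
proof (intro allI)
  fix k l
  have "(\<Sum>i\<in>UNIV. act4 g T i i k l) = (\<Sum>i\<in>UNIV. \<Sum>a\<in>UNIV. g$i$a * (\<Sum>b\<in>UNIV. g$i$b *
     (\<Sum>c\<in>UNIV. g$k$c * (\<Sum>d\<in>UNIV. g$l$d * T a b c d))))"
    by (simp add: act4_def sum_distrib_left mult.assoc)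
  also have "\<dots> = (\<Sum>a\<in>UNIV. (\<Sum>c\<in>UNIV. g$k$c * (\<Sum>d\<in>UNIV. g$l$d * T a a c d)))"
    by (rule orth_contract[OF assms(2)])
  also have "\<dots> = (\<Sum>c\<in>UNIV. g$k$c * (\<Sum>d\<in>UNIV. g$l$d * (\<Sum>a\<in>UNIV. T a a c d)))"
    by (simp add: sum_3 algebra_simps)
  also have "\<dots> = 0" using assms(1) by (simp add: traceless4_def)
  finally show "(\<Sum>i\<in>UNIV. act4 g T i i k l) = 0" .
qed


(* from P6.thy *)


definition sperm :: "(3 \<Rightarrow> 3) \<Rightarrow> (3 \<Rightarrow> real) \<Rightarrow> real^3^3" where
  "sperm \<pi> s = (\<chi> i j. if j = \<pi> i then s i else 0)"

lemma sperm_mulv: "(sperm \<pi> s *v x)$i = s i * x$(\<pi> i)"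
  by (simp add: sperm_def matrix_vector_mult_def if_distrib[where f="\<lambda>z. z * _"] cong: if_cong)

lemma A_sperm:
  "A1 (sperm \<pi> s) T = (\<lambda>a b c d. s a * T (\<pi> a) b c d)"
  "A2 (sperm \<pi> s) T = (\<lambda>a b c d. s b * T a (\<pi> b) c d)"
  "A3 (sperm \<pi> s) T = (\<lambda>a b c d. s c * T a b (\<pi> c) d)"
  "A4 (sperm \<pi> s) T = (\<lambda>a b c d. s d * T a b c (\<pi> d))"
  by (simp_all add: A1_def A2_def A3_def A4_def sperm_def if_distrib[where f="\<lambda>z. z * _"] cong: if_cong)

lemma act4_sperm: "act4 (sperm \<pi> s) K i j k l = s i * s j * s k * s l * K (\<pi> i) (\<pi> j) (\<pi> k) (\<pi> l)"
  by (simp add: act4_A A_sperm)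

definition Vc :: "(real^3) set" where "Vc = {v. \<forall>i. v$i = 1 \<or> v$i = -1}"

lemma V_char: "cube_vertices std_basis = Vc"
proof -
  have e: "(\<Sum>i\<in>UNIV. s i *\<^sub>R std_basis i) = (\<chi> j. s j)" for s :: "3 \<Rightarrow> real"
    by (simp add: vec_eq_iff std_basis_def axis_def sum_3 forall_3)
  show ?thesis
  proof (rule set_eqI)
    fix v :: "real^3"
    show "v \<in> cube_vertices std_basis \<longleftrightarrow> v \<in> Vc"
    proof
      assume "v \<in> cube_vertices std_basis"
      then obtain s where s: "\<forall>i. s i = 1 \<or> s i = -1" and v: "v = (\<chi> j. s j)"
        unfolding cube_vertices_def e by blast
      show "v \<in> Vc" unfolding Vc_def v using s by simp
    next
      assume "v \<in> Vc"
      then have "\<forall>i. v$i = 1 \<or> v$i = -1" and "v = (\<chi> j. v$j)" by (auto simp: Vc_def vec_eq_iff)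
      then show "v \<in> cube_vertices std_basis" unfolding cube_vertices_def e by blast
    qed
  qed
qed

lemma sperm_V:
  assumes "\<forall>i. s i = 1 \<or> s i = -1" "x \<in> Vc"
  shows "sperm \<pi> s *v x \<in> Vc"
  using assms unfolding Vc_def by (auto simp: sperm_mulv) (metis mult_minus_left mult_1 mult_minus_right minus_minus)+

lemma sperm_oct:
  assumes "\<forall>i. s i = 1 \<or> s i = -1" "\<forall>i. s' i = 1 \<or> s' i = -1"
    "sperm \<pi> s \<in> SO3" "sperm \<pi> s ** sperm \<pi>' s' = mat 1"
  shows "sperm \<pi> s \<in> octahedral"
  unfolding octahedral_def cube_rot_group_def V_char
proof (intro CollectI conjI)
  show "sperm \<pi> s \<in> SO3" by fact
  show "(*v) (sperm \<pi> s) ` Vc = Vc"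
  proof
    show "(*v) (sperm \<pi> s) ` Vc \<subseteq> Vc" using sperm_V[OF assms(1)] by blast
    show "Vc \<subseteq> (*v) (sperm \<pi> s) ` Vc"
    proof
      fix v assume v: "v \<in> Vc"
      have "v = sperm \<pi> s *v (sperm \<pi>' s' *v v)"
        by (simp add: matrix_vector_mul_assoc assms(4))
      moreover have "sperm \<pi>' s' *v v \<in> Vc" using sperm_V[OF assms(2) v] .
      ultimately show "v \<in> (*v) (sperm \<pi> s) ` Vc" by blast
    qed
  qed
qed

definition "piz = (\<lambda>i::3. if i = 1 then 2 else if i = 2 then 1 else 3)"
definition "sz = (\<lambda>i::3. if i = 1 then -1 else (1::real))"
definition "sz' = (\<lambda>i::3. if i = 2 then -1 else (1::real))"
definition "pic = (\<lambda>i::3. if i = 1 then 2 else if i = 2 then 3 else 1)"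
definition "pic' = (\<lambda>i::3. if i = 1 then 3 else if i = 2 then 1 else 2)"

lemmas conc_simps = vec_eq_iff forall_3 sum_3 matrix_matrix_mult_def transpose_def sperm_def mat_def
   piz_def sz_def sz'_def pic_def pic'_def det_3 orthogonal_matrix_def SO3_def

lemma Rz_oct: "sperm piz sz \<in> octahedral"
  by (rule sperm_oct[where s'=sz' and \<pi>'=piz]) (simp_all add: conc_simps)

lemma C_oct: "sperm pic (\<lambda>_. 1) \<in> octahedral"
  by (rule sperm_oct[where s'="\<lambda>_. 1" and \<pi>'=pic']) (simp_all add: conc_simps)


(* from P7.thy *)


definition Nt :: tensor4 where
  "Nt = (\<lambda>i j k l. if i = j \<and> j = k \<and> k = l then 1
     else if (i = j \<and> k = l) \<or> (i = k \<and> j = l) \<or> (i = l \<and> j = k) then -1/2 else 0)"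

lemma normal_form:
  fixes K :: tensor4
  assumes s1: "\<And>i j k l. K i j k l = K j i k l"
    and s2: "\<And>i j k l. K i j k l = K i k j l"
    and s3: "\<And>i j k l. K i j k l = K i j l k"
    and tr: "\<And>k l. (\<Sum>i\<in>UNIV. K i i k l) = 0"
    and R: "\<And>i j k l. K i j k l = sz i * sz j * sz k * sz l * K (piz i) (piz j) (piz k) (piz l)"
    and C: "\<And>i j k l. K i j k l = K (pic i) (pic j) (pic k) (pic l)"
  shows "K = (\<lambda>i j k l. K 1 1 1 1 * Nt i j k l)"
proof -
  have i0: "K 1 1 1 1 = K 2 2 2 2" using R[of 1 1 1 1] by (simp add: sz_def piz_def pic_def)
  have f2222: "K 2 2 2 2 = K 1 1 1 1" using i0 by linarith
  have i1: "K 2 2 2 2 = K 3 3 3 3" using C[of 2 2 2 2] by (simp add: sz_def piz_def pic_def)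
  have f3333: "K 3 3 3 3 = K 1 1 1 1" using i1 f2222 by linarith
  have i2: "K 1 1 1 2 = K 1 1 2 1" using s3[of 1 1 1 2] by (simp add: sz_def piz_def pic_def)
  have f1121: "K 1 1 2 1 = K 1 1 1 2" using i2 by linarith
  have i3: "K 1 1 1 2 = - K 2 2 2 1" using R[of 1 1 1 2] by (simp add: sz_def piz_def pic_def)
  have f2221: "K 2 2 2 1 = - K 1 1 1 2" using i3 by linarith
  have i4: "K 1 1 1 2 = K 2 2 2 3" using C[of 1 1 1 2] by (simp add: sz_def piz_def pic_def)
  have f2223: "K 2 2 2 3 = K 1 1 1 2" using i4 by linarith
  have i5: "K 1 1 2 1 = K 1 2 1 1" using s2[of 1 1 2 1] by (simp add: sz_def piz_def pic_def)
  have f1211: "K 1 2 1 1 = K 1 1 1 2" using i5 f1121 by linarith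
  have i6: "K 1 1 2 1 = - K 2 2 1 2" using R[of 1 1 2 1] by (simp add: sz_def piz_def pic_def)
  have f2212: "K 2 2 1 2 = - K 1 1 1 2" using i6 f1121 by linarith
  have i7: "K 1 1 2 1 = K 2 2 3 2" using C[of 1 1 2 1] by (simp add: sz_def piz_def pic_def)
  have f2232: "K 2 2 3 2 = K 1 1 1 2" using i7 f1121 by linarith
  have i8: "K 2 2 2 1 = K 3 3 3 2" using C[of 2 2 2 1] by (simp add: sz_def piz_def pic_def)
  have f3332: "K 3 3 3 2 = - K 1 1 1 2" using i8 f2221 by linarith
  have i9: "K 2 2 2 3 = K 1 1 1 3" using R[of 2 2 2 3] by (simp add: sz_def piz_def pic_def)
  have f1113: "K 1 1 1 3 = K 1 1 1 2" using i9 f2223 by linarith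
  have i10: "K 2 2 2 3 = K 3 3 3 1" using C[of 2 2 2 3] by (simp add: sz_def piz_def pic_def)
  have f3331: "K 3 3 3 1 = K 1 1 1 2" using i10 f2223 by linarith
  have i11: "K 1 2 1 1 = K 2 1 1 1" using s1[of 1 2 1 1] by (simp add: sz_def piz_def pic_def)
  have f2111: "K 2 1 1 1 = K 1 1 1 2" using i11 f1211 by linarith
  have i12: "K 1 2 1 1 = - K 2 1 2 2" using R[of 1 2 1 1] by (simp add: sz_def piz_def pic_def)
  have f2122: "K 2 1 2 2 = - K 1 1 1 2" using i12 f1211 by linarith
  have i13: "K 1 2 1 1 = K 2 3 2 2" using C[of 1 2 1 1] by (simp add: sz_def piz_def pic_def)
  have f2322: "K 2 3 2 2 = K 1 1 1 2" using i13 f1211 by linarith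
  have i14: "K 2 2 1 2 = K 3 3 2 3" using C[of 2 2 1 2] by (simp add: sz_def piz_def pic_def)
  have f3323: "K 3 3 2 3 = - K 1 1 1 2" using i14 f2212 by linarith
  have i15: "K 2 2 3 2 = K 1 1 3 1" using R[of 2 2 3 2] by (simp add: sz_def piz_def pic_def)
  have f1131: "K 1 1 3 1 = K 1 1 1 2" using i15 f2232 by linarith
  have i16: "K 2 2 3 2 = K 3 3 1 3" using C[of 2 2 3 2] by (simp add: sz_def piz_def pic_def)
  have f3313: "K 3 3 1 3 = K 1 1 1 2" using i16 f2232 by linarith
  have i17: "K 2 1 1 1 = - K 1 2 2 2" using R[of 2 1 1 1] by (simp add: sz_def piz_def pic_def)
  have f1222: "K 1 2 2 2 = - K 1 1 1 2" using i17 f2111 by linarith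
  have i18: "K 2 1 1 1 = K 3 2 2 2" using C[of 2 1 1 1] by (simp add: sz_def piz_def pic_def)
  have f3222: "K 3 2 2 2 = K 1 1 1 2" using i18 f2111 by linarith
  have i19: "K 2 1 2 2 = K 3 2 3 3" using C[of 2 1 2 2] by (simp add: sz_def piz_def pic_def)
  have f3233: "K 3 2 3 3 = - K 1 1 1 2" using i19 f2122 by linarith
  have i20: "K 2 3 2 2 = K 1 3 1 1" using R[of 2 3 2 2] by (simp add: sz_def piz_def pic_def)
  have f1311: "K 1 3 1 1 = K 1 1 1 2" using i20 f2322 by linarith
  have i21: "K 2 3 2 2 = K 3 1 3 3" using C[of 2 3 2 2] by (simp add: sz_def piz_def pic_def)
  have f3133: "K 3 1 3 3 = K 1 1 1 2" using i21 f2322 by linarith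
  have i22: "K 1 2 2 2 = K 2 3 3 3" using C[of 1 2 2 2] by (simp add: sz_def piz_def pic_def)
  have f2333: "K 2 3 3 3 = - K 1 1 1 2" using i22 f1222 by linarith
  have i23: "K 3 2 2 2 = K 3 1 1 1" using R[of 3 2 2 2] by (simp add: sz_def piz_def pic_def)
  have f3111: "K 3 1 1 1 = K 1 1 1 2" using i23 f3222 by linarith
  have i24: "K 3 2 2 2 = K 1 3 3 3" using C[of 3 2 2 2] by (simp add: sz_def piz_def pic_def)
  have f1333: "K 1 3 3 3 = K 1 1 1 2" using i24 f3222 by linarith
  have i25: "K 3 1 1 1 = K 1 2 2 2" using C[of 3 1 1 1] by (simp add: sz_def piz_def pic_def)
  have z1112: "K 1 1 1 2 = 0" using i25 f3111 f1222 by linarith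
  have i26: "K 1 1 2 2 = K 1 2 1 2" using s2[of 1 1 2 2] by (simp add: sz_def piz_def pic_def)
  have f1212: "K 1 2 1 2 = K 1 1 2 2" using i26 by linarith
  have i27: "K 1 1 2 2 = K 2 2 1 1" using R[of 1 1 2 2] by (simp add: sz_def piz_def pic_def)
  have f2211: "K 2 2 1 1 = K 1 1 2 2" using i27 by linarith
  have i28: "K 1 1 2 2 = K 2 2 3 3" using C[of 1 1 2 2] by (simp add: sz_def piz_def pic_def)
  have f2233: "K 2 2 3 3 = K 1 1 2 2" using i28 by linarith
  have i29: "K 1 2 1 2 = K 2 1 1 2" using s1[of 1 2 1 2] by (simp add: sz_def piz_def pic_def)
  have f2112: "K 2 1 1 2 = K 1 1 2 2" using i29 f1212 by linarith
  have i30: "K 1 2 1 2 = K 1 2 2 1" using s3[of 1 2 1 2] by (simp add: sz_def piz_def pic_def)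
  have f1221: "K 1 2 2 1 = K 1 1 2 2" using i30 f1212 by linarith
  have i31: "K 1 2 1 2 = K 2 1 2 1" using R[of 1 2 1 2] by (simp add: sz_def piz_def pic_def)
  have f2121: "K 2 1 2 1 = K 1 1 2 2" using i31 f1212 by linarith
  have i32: "K 1 2 1 2 = K 2 3 2 3" using C[of 1 2 1 2] by (simp add: sz_def piz_def pic_def)
  have f2323: "K 2 3 2 3 = K 1 1 2 2" using i32 f1212 by linarith
  have i33: "K 2 2 1 1 = K 3 3 2 2" using C[of 2 2 1 1] by (simp add: sz_def piz_def pic_def)
  have f3322: "K 3 3 2 2 = K 1 1 2 2" using i33 f2211 by linarith
  have i34: "K 2 2 3 3 = K 1 1 3 3" using R[of 2 2 3 3] by (simp add: sz_def piz_def pic_def)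
  have f1133: "K 1 1 3 3 = K 1 1 2 2" using i34 f2233 by linarith
  have i35: "K 2 2 3 3 = K 3 3 1 1" using C[of 2 2 3 3] by (simp add: sz_def piz_def pic_def)
  have f3311: "K 3 3 1 1 = K 1 1 2 2" using i35 f2233 by linarith
  have i36: "K 2 1 1 2 = K 3 2 2 3" using C[of 2 1 1 2] by (simp add: sz_def piz_def pic_def)
  have f3223: "K 3 2 2 3 = K 1 1 2 2" using i36 f2112 by linarith
  have i37: "K 1 2 2 1 = K 2 3 3 2" using C[of 1 2 2 1] by (simp add: sz_def piz_def pic_def)
  have f2332: "K 2 3 3 2 = K 1 1 2 2" using i37 f1221 by linarith
  have i38: "K 2 1 2 1 = K 3 2 3 2" using C[of 2 1 2 1] by (simp add: sz_def piz_def pic_def)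
  have f3232: "K 3 2 3 2 = K 1 1 2 2" using i38 f2121 by linarith
  have i39: "K 2 3 2 3 = K 1 3 1 3" using R[of 2 3 2 3] by (simp add: sz_def piz_def pic_def)
  have f1313: "K 1 3 1 3 = K 1 1 2 2" using i39 f2323 by linarith
  have i40: "K 2 3 2 3 = K 3 1 3 1" using C[of 2 3 2 3] by (simp add: sz_def piz_def pic_def)
  have f3131: "K 3 1 3 1 = K 1 1 2 2" using i40 f2323 by linarith
  have i41: "K 3 2 2 3 = K 3 1 1 3" using R[of 3 2 2 3] by (simp add: sz_def piz_def pic_def)
  have f3113: "K 3 1 1 3 = K 1 1 2 2" using i41 f3223 by linarith
  have i42: "K 3 2 2 3 = K 1 3 3 1" using C[of 3 2 2 3] by (simp add: sz_def piz_def pic_def)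
  have f1331: "K 1 3 3 1 = K 1 1 2 2" using i42 f3223 by linarith
  have i43: "K 1 1 2 3 = K 1 2 1 3" using s2[of 1 1 2 3] by (simp add: sz_def piz_def pic_def)
  have f1213: "K 1 2 1 3 = K 1 1 2 3" using i43 by linarith
  have i44: "K 1 1 2 3 = K 1 1 3 2" using s3[of 1 1 2 3] by (simp add: sz_def piz_def pic_def)
  have f1132: "K 1 1 3 2 = K 1 1 2 3" using i44 by linarith
  have i45: "K 1 1 2 3 = K 2 2 1 3" using R[of 1 1 2 3] by (simp add: sz_def piz_def pic_def)
  have f2213: "K 2 2 1 3 = K 1 1 2 3" using i45 by linarith
  have i46: "K 1 1 2 3 = K 2 2 3 1" using C[of 1 1 2 3] by (simp add: sz_def piz_def pic_def)
  have f2231: "K 2 2 3 1 = K 1 1 2 3" using i46 by linarith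
  have i47: "K 1 2 1 3 = K 2 1 1 3" using s1[of 1 2 1 3] by (simp add: sz_def piz_def pic_def)
  have f2113: "K 2 1 1 3 = K 1 1 2 3" using i47 f1213 by linarith
  have i48: "K 1 2 1 3 = K 1 2 3 1" using s3[of 1 2 1 3] by (simp add: sz_def piz_def pic_def)
  have f1231: "K 1 2 3 1 = K 1 1 2 3" using i48 f1213 by linarith
  have i49: "K 1 2 1 3 = K 2 1 2 3" using R[of 1 2 1 3] by (simp add: sz_def piz_def pic_def)
  have f2123: "K 2 1 2 3 = K 1 1 2 3" using i49 f1213 by linarith
  have i50: "K 1 2 1 3 = K 2 3 2 1" using C[of 1 2 1 3] by (simp add: sz_def piz_def pic_def)
  have f2321: "K 2 3 2 1 = K 1 1 2 3" using i50 f1213 by linarith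
  have i51: "K 1 1 3 2 = K 1 3 1 2" using s2[of 1 1 3 2] by (simp add: sz_def piz_def pic_def)
  have f1312: "K 1 3 1 2 = K 1 1 2 3" using i51 f1132 by linarith
  have i52: "K 2 2 1 3 = K 3 3 2 1" using C[of 2 2 1 3] by (simp add: sz_def piz_def pic_def)
  have f3321: "K 3 3 2 1 = K 1 1 2 3" using i52 f2213 by linarith
  have i53: "K 2 2 3 1 = K 3 3 1 2" using C[of 2 2 3 1] by (simp add: sz_def piz_def pic_def)
  have f3312: "K 3 3 1 2 = K 1 1 2 3" using i53 f2231 by linarith
  have i54: "K 2 1 1 3 = K 2 1 3 1" using s3[of 2 1 1 3] by (simp add: sz_def piz_def pic_def)
  have f2131: "K 2 1 3 1 = K 1 1 2 3" using i54 f2113 by linarith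
  have i55: "K 2 1 1 3 = K 1 2 2 3" using R[of 2 1 1 3] by (simp add: sz_def piz_def pic_def)
  have f1223: "K 1 2 2 3 = K 1 1 2 3" using i55 f2113 by linarith
  have i56: "K 2 1 1 3 = K 3 2 2 1" using C[of 2 1 1 3] by (simp add: sz_def piz_def pic_def)
  have f3221: "K 3 2 2 1 = K 1 1 2 3" using i56 f2113 by linarith
  have i57: "K 1 2 3 1 = K 1 3 2 1" using s2[of 1 2 3 1] by (simp add: sz_def piz_def pic_def)
  have f1321: "K 1 3 2 1 = K 1 1 2 3" using i57 f1231 by linarith
  have i58: "K 1 2 3 1 = K 2 1 3 2" using R[of 1 2 3 1] by (simp add: sz_def piz_def pic_def)
  have f2132: "K 2 1 3 2 = K 1 1 2 3" using i58 f1231 by linarith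
  have i59: "K 1 2 3 1 = K 2 3 1 2" using C[of 1 2 3 1] by (simp add: sz_def piz_def pic_def)
  have f2312: "K 2 3 1 2 = K 1 1 2 3" using i59 f1231 by linarith
  have i60: "K 2 1 2 3 = K 3 2 3 1" using C[of 2 1 2 3] by (simp add: sz_def piz_def pic_def)
  have f3231: "K 3 2 3 1 = K 1 1 2 3" using i60 f2123 by linarith
  have i61: "K 2 3 2 1 = K 3 1 3 2" using C[of 2 3 2 1] by (simp add: sz_def piz_def pic_def)
  have f3132: "K 3 1 3 2 = K 1 1 2 3" using i61 f2321 by linarith
  have i62: "K 1 3 1 2 = K 3 1 1 2" using s1[of 1 3 1 2] by (simp add: sz_def piz_def pic_def)
  have f3112: "K 3 1 1 2 = K 1 1 2 3" using i62 f1312 by linarith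
  have i63: "K 2 1 3 1 = K 2 3 1 1" using s2[of 2 1 3 1] by (simp add: sz_def piz_def pic_def)
  have f2311: "K 2 3 1 1 = K 1 1 2 3" using i63 f2131 by linarith
  have i64: "K 2 1 3 1 = K 1 2 3 2" using R[of 2 1 3 1] by (simp add: sz_def piz_def pic_def)
  have f1232: "K 1 2 3 2 = K 1 1 2 3" using i64 f2131 by linarith
  have i65: "K 2 1 3 1 = K 3 2 1 2" using C[of 2 1 3 1] by (simp add: sz_def piz_def pic_def)
  have f3212: "K 3 2 1 2 = K 1 1 2 3" using i65 f2131 by linarith
  have i66: "K 1 2 2 3 = K 2 3 3 1" using C[of 1 2 2 3] by (simp add: sz_def piz_def pic_def)
  have f2331: "K 2 3 3 1 = K 1 1 2 3" using i66 f1223 by linarith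
  have i67: "K 3 2 2 1 = K 1 3 3 2" using C[of 3 2 2 1] by (simp add: sz_def piz_def pic_def)
  have f1332: "K 1 3 3 2 = K 1 1 2 3" using i67 f3221 by linarith
  have i68: "K 1 3 2 1 = K 3 1 2 1" using s1[of 1 3 2 1] by (simp add: sz_def piz_def pic_def)
  have f3121: "K 3 1 2 1 = K 1 1 2 3" using i68 f1321 by linarith
  have i69: "K 2 1 3 2 = K 3 2 1 3" using C[of 2 1 3 2] by (simp add: sz_def piz_def pic_def)
  have f3213: "K 3 2 1 3 = K 1 1 2 3" using i69 f2132 by linarith
  have i70: "K 2 3 1 2 = K 3 1 2 3" using C[of 2 3 1 2] by (simp add: sz_def piz_def pic_def)
  have f3123: "K 3 1 2 3 = K 1 1 2 3" using i70 f2312 by linarith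
  have i71: "K 2 3 1 1 = K 3 2 1 1" using s1[of 2 3 1 1] by (simp add: sz_def piz_def pic_def)
  have f3211: "K 3 2 1 1 = K 1 1 2 3" using i71 f2311 by linarith
  have i72: "K 2 3 1 1 = K 1 3 2 2" using R[of 2 3 1 1] by (simp add: sz_def piz_def pic_def)
  have f1322: "K 1 3 2 2 = K 1 1 2 3" using i72 f2311 by linarith
  have i73: "K 2 3 1 1 = K 3 1 2 2" using C[of 2 3 1 1] by (simp add: sz_def piz_def pic_def)
  have f3122: "K 3 1 2 2 = K 1 1 2 3" using i73 f2311 by linarith
  have i74: "K 1 2 3 2 = K 2 3 1 3" using C[of 1 2 3 2] by (simp add: sz_def piz_def pic_def)
  have f2313: "K 2 3 1 3 = K 1 1 2 3" using i74 f1232 by linarith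
  have i75: "K 3 2 1 2 = K 1 3 2 3" using C[of 3 2 1 2] by (simp add: sz_def piz_def pic_def)
  have f1323: "K 1 3 2 3 = K 1 1 2 3" using i75 f3212 by linarith
  have i76: "K 1 3 2 2 = K 2 1 3 3" using C[of 1 3 2 2] by (simp add: sz_def piz_def pic_def)
  have f2133: "K 2 1 3 3 = K 1 1 2 3" using i76 f1322 by linarith
  have i77: "K 3 1 2 2 = K 1 2 3 3" using C[of 3 1 2 2] by (simp add: sz_def piz_def pic_def)
  have f1233: "K 1 2 3 3 = K 1 1 2 3" using i77 f3122 by linarith
  have i78: "K 1 2 3 3 = - K 2 1 3 3" using R[of 1 2 3 3] by (simp add: sz_def piz_def pic_def)
  have z1123: "K 1 1 2 3 = 0" using i78 f1233 f2133 by linarith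
  have tr11: "K 1 1 1 1 + K 2 2 1 1 + K 3 3 1 1 = 0" using tr[of 1 1] by (simp add: sum_3)
  have g1112: "K 1 1 1 2 = (0) * K 1 1 1 1" using z1112 by linarith
  have g1113: "K 1 1 1 3 = (0) * K 1 1 1 1" using f1113 z1112 by linarith
  have g1121: "K 1 1 2 1 = (0) * K 1 1 1 1" using f1121 z1112 by linarith
  have g1122: "K 1 1 2 2 = (-1/2) * K 1 1 1 1" using tr11 f2211 f3311 by linarith
  have g1123: "K 1 1 2 3 = (0) * K 1 1 1 1" using z1123 by linarith
  have g1131: "K 1 1 3 1 = (0) * K 1 1 1 1" using f1131 z1112 by linarith
  have g1132: "K 1 1 3 2 = (0) * K 1 1 1 1" using f1132 z1123 by linarith
  have g1133: "K 1 1 3 3 = (-1/2) * K 1 1 1 1" using f1133 tr11 f2211 f3311 by linarith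
  have g1211: "K 1 2 1 1 = (0) * K 1 1 1 1" using f1211 z1112 by linarith
  have g1212: "K 1 2 1 2 = (-1/2) * K 1 1 1 1" using f1212 tr11 f2211 f3311 by linarith
  have g1213: "K 1 2 1 3 = (0) * K 1 1 1 1" using f1213 z1123 by linarith
  have g1221: "K 1 2 2 1 = (-1/2) * K 1 1 1 1" using f1221 tr11 f2211 f3311 by linarith
  have g1222: "K 1 2 2 2 = (0) * K 1 1 1 1" using f1222 z1112 by linarith
  have g1223: "K 1 2 2 3 = (0) * K 1 1 1 1" using f1223 z1123 by linarith
  have g1231: "K 1 2 3 1 = (0) * K 1 1 1 1" using f1231 z1123 by linarith
  have g1232: "K 1 2 3 2 = (0) * K 1 1 1 1" using f1232 z1123 by linarith
  have g1233: "K 1 2 3 3 = (0) * K 1 1 1 1" using f1233 z1123 by linarith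
  have g1311: "K 1 3 1 1 = (0) * K 1 1 1 1" using f1311 z1112 by linarith
  have g1312: "K 1 3 1 2 = (0) * K 1 1 1 1" using f1312 z1123 by linarith
  have g1313: "K 1 3 1 3 = (-1/2) * K 1 1 1 1" using f1313 tr11 f2211 f3311 by linarith
  have g1321: "K 1 3 2 1 = (0) * K 1 1 1 1" using f1321 z1123 by linarith
  have g1322: "K 1 3 2 2 = (0) * K 1 1 1 1" using f1322 z1123 by linarith
  have g1323: "K 1 3 2 3 = (0) * K 1 1 1 1" using f1323 z1123 by linarith
  have g1331: "K 1 3 3 1 = (-1/2) * K 1 1 1 1" using f1331 tr11 f2211 f3311 by linarith
  have g1332: "K 1 3 3 2 = (0) * K 1 1 1 1" using f1332 z1123 by linarith
  have g1333: "K 1 3 3 3 = (0) * K 1 1 1 1" using f1333 z1112 by linarith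
  have g2111: "K 2 1 1 1 = (0) * K 1 1 1 1" using f2111 z1112 by linarith
  have g2112: "K 2 1 1 2 = (-1/2) * K 1 1 1 1" using f2112 tr11 f2211 f3311 by linarith
  have g2113: "K 2 1 1 3 = (0) * K 1 1 1 1" using f2113 z1123 by linarith
  have g2121: "K 2 1 2 1 = (-1/2) * K 1 1 1 1" using f2121 tr11 f2211 f3311 by linarith
  have g2122: "K 2 1 2 2 = (0) * K 1 1 1 1" using f2122 z1112 by linarith
  have g2123: "K 2 1 2 3 = (0) * K 1 1 1 1" using f2123 z1123 by linarith
  have g2131: "K 2 1 3 1 = (0) * K 1 1 1 1" using f2131 z1123 by linarith
  have g2132: "K 2 1 3 2 = (0) * K 1 1 1 1" using f2132 z1123 by linarith
  have g2133: "K 2 1 3 3 = (0) * K 1 1 1 1" using f2133 z1123 by linarith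
  have g2211: "K 2 2 1 1 = (-1/2) * K 1 1 1 1" using f2211 tr11 f2211 f3311 by linarith
  have g2212: "K 2 2 1 2 = (0) * K 1 1 1 1" using f2212 z1112 by linarith
  have g2213: "K 2 2 1 3 = (0) * K 1 1 1 1" using f2213 z1123 by linarith
  have g2221: "K 2 2 2 1 = (0) * K 1 1 1 1" using f2221 z1112 by linarith
  have g2222: "K 2 2 2 2 = (1) * K 1 1 1 1" using f2222 by linarith
  have g2223: "K 2 2 2 3 = (0) * K 1 1 1 1" using f2223 z1112 by linarith
  have g2231: "K 2 2 3 1 = (0) * K 1 1 1 1" using f2231 z1123 by linarith
  have g2232: "K 2 2 3 2 = (0) * K 1 1 1 1" using f2232 z1112 by linarith
  have g2233: "K 2 2 3 3 = (-1/2) * K 1 1 1 1" using f2233 tr11 f2211 f3311 by linarith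
  have g2311: "K 2 3 1 1 = (0) * K 1 1 1 1" using f2311 z1123 by linarith
  have g2312: "K 2 3 1 2 = (0) * K 1 1 1 1" using f2312 z1123 by linarith
  have g2313: "K 2 3 1 3 = (0) * K 1 1 1 1" using f2313 z1123 by linarith
  have g2321: "K 2 3 2 1 = (0) * K 1 1 1 1" using f2321 z1123 by linarith
  have g2322: "K 2 3 2 2 = (0) * K 1 1 1 1" using f2322 z1112 by linarith
  have g2323: "K 2 3 2 3 = (-1/2) * K 1 1 1 1" using f2323 tr11 f2211 f3311 by linarith
  have g2331: "K 2 3 3 1 = (0) * K 1 1 1 1" using f2331 z1123 by linarith
  have g2332: "K 2 3 3 2 = (-1/2) * K 1 1 1 1" using f2332 tr11 f2211 f3311 by linarith
  have g2333: "K 2 3 3 3 = (0) * K 1 1 1 1" using f2333 z1112 by linarith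
  have g3111: "K 3 1 1 1 = (0) * K 1 1 1 1" using f3111 z1112 by linarith
  have g3112: "K 3 1 1 2 = (0) * K 1 1 1 1" using f3112 z1123 by linarith
  have g3113: "K 3 1 1 3 = (-1/2) * K 1 1 1 1" using f3113 tr11 f2211 f3311 by linarith
  have g3121: "K 3 1 2 1 = (0) * K 1 1 1 1" using f3121 z1123 by linarith
  have g3122: "K 3 1 2 2 = (0) * K 1 1 1 1" using f3122 z1123 by linarith
  have g3123: "K 3 1 2 3 = (0) * K 1 1 1 1" using f3123 z1123 by linarith
  have g3131: "K 3 1 3 1 = (-1/2) * K 1 1 1 1" using f3131 tr11 f2211 f3311 by linarith
  have g3132: "K 3 1 3 2 = (0) * K 1 1 1 1" using f3132 z1123 by linarith
  have g3133: "K 3 1 3 3 = (0) * K 1 1 1 1" using f3133 z1112 by linarith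
  have g3211: "K 3 2 1 1 = (0) * K 1 1 1 1" using f3211 z1123 by linarith
  have g3212: "K 3 2 1 2 = (0) * K 1 1 1 1" using f3212 z1123 by linarith
  have g3213: "K 3 2 1 3 = (0) * K 1 1 1 1" using f3213 z1123 by linarith
  have g3221: "K 3 2 2 1 = (0) * K 1 1 1 1" using f3221 z1123 by linarith
  have g3222: "K 3 2 2 2 = (0) * K 1 1 1 1" using f3222 z1112 by linarith
  have g3223: "K 3 2 2 3 = (-1/2) * K 1 1 1 1" using f3223 tr11 f2211 f3311 by linarith
  have g3231: "K 3 2 3 1 = (0) * K 1 1 1 1" using f3231 z1123 by linarith
  have g3232: "K 3 2 3 2 = (-1/2) * K 1 1 1 1" using f3232 tr11 f2211 f3311 by linarith
  have g3233: "K 3 2 3 3 = (0) * K 1 1 1 1" using f3233 z1112 by linarith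
  have g3311: "K 3 3 1 1 = (-1/2) * K 1 1 1 1" using f3311 tr11 f2211 f3311 by linarith
  have g3312: "K 3 3 1 2 = (0) * K 1 1 1 1" using f3312 z1123 by linarith
  have g3313: "K 3 3 1 3 = (0) * K 1 1 1 1" using f3313 z1112 by linarith
  have g3321: "K 3 3 2 1 = (0) * K 1 1 1 1" using f3321 z1123 by linarith
  have g3322: "K 3 3 2 2 = (-1/2) * K 1 1 1 1" using f3322 tr11 f2211 f3311 by linarith
  have g3323: "K 3 3 2 3 = (0) * K 1 1 1 1" using f3323 z1112 by linarith
  have g3331: "K 3 3 3 1 = (0) * K 1 1 1 1" using f3331 z1112 by linarith
  have g3332: "K 3 3 3 2 = (0) * K 1 1 1 1" using f3332 z1112 by linarith
  have g3333: "K 3 3 3 3 = (1) * K 1 1 1 1" using f3333 by linarith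
  note finals = g1112 g1113 g1121 g1122 g1123 g1131 g1132 g1133 g1211 g1212 g1213 g1221 g1222 g1223 g1231 g1232 g1233 g1311 g1312 g1313 g1321 g1322 g1323 g1331 g1332 g1333 g2111 g2112 g2113 g2121 g2122 g2123 g2131 g2132 g2133 g2211 g2212 g2213 g2221 g2222 g2223 g2231 g2232 g2233 g2311 g2312 g2313 g2321 g2322 g2323 g2331 g2332 g2333 g3111 g3112 g3113 g3121 g3122 g3123 g3131 g3132 g3133 g3211 g3212 g3213 g3221 g3222 g3223 g3231 g3232 g3233 g3311 g3312 g3313 g3321 g3322 g3323 g3331 g3332 g3333
  have h1111: "K 1 1 1 1 = K 1 1 1 1 * Nt 1 1 1 1" by (simp add: Nt_def)
  have h1112: "K 1 1 1 2 = K 1 1 1 1 * Nt 1 1 1 2" by (simp add: g1112 Nt_def)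
  have h1113: "K 1 1 1 3 = K 1 1 1 1 * Nt 1 1 1 3" by (simp add: g1113 Nt_def)
  have h1121: "K 1 1 2 1 = K 1 1 1 1 * Nt 1 1 2 1" by (simp add: g1121 Nt_def)
  have h1122: "K 1 1 2 2 = K 1 1 1 1 * Nt 1 1 2 2" by (simp add: g1122 Nt_def)
  have h1123: "K 1 1 2 3 = K 1 1 1 1 * Nt 1 1 2 3" by (simp add: g1123 Nt_def)
  have h1131: "K 1 1 3 1 = K 1 1 1 1 * Nt 1 1 3 1" by (simp add: g1131 Nt_def)
  have h1132: "K 1 1 3 2 = K 1 1 1 1 * Nt 1 1 3 2" by (simp add: g1132 Nt_def)
  have h1133: "K 1 1 3 3 = K 1 1 1 1 * Nt 1 1 3 3" by (simp add: g1133 Nt_def)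
  have h1211: "K 1 2 1 1 = K 1 1 1 1 * Nt 1 2 1 1" by (simp add: g1211 Nt_def)
  have h1212: "K 1 2 1 2 = K 1 1 1 1 * Nt 1 2 1 2" by (simp add: g1212 Nt_def)
  have h1213: "K 1 2 1 3 = K 1 1 1 1 * Nt 1 2 1 3" by (simp add: g1213 Nt_def)
  have h1221: "K 1 2 2 1 = K 1 1 1 1 * Nt 1 2 2 1" by (simp add: g1221 Nt_def)
  have h1222: "K 1 2 2 2 = K 1 1 1 1 * Nt 1 2 2 2" by (simp add: g1222 Nt_def)
  have h1223: "K 1 2 2 3 = K 1 1 1 1 * Nt 1 2 2 3" by (simp add: g1223 Nt_def)
  have h1231: "K 1 2 3 1 = K 1 1 1 1 * Nt 1 2 3 1" by (simp add: g1231 Nt_def)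
  have h1232: "K 1 2 3 2 = K 1 1 1 1 * Nt 1 2 3 2" by (simp add: g1232 Nt_def)
  have h1233: "K 1 2 3 3 = K 1 1 1 1 * Nt 1 2 3 3" by (simp add: g1233 Nt_def)
  have h1311: "K 1 3 1 1 = K 1 1 1 1 * Nt 1 3 1 1" by (simp add: g1311 Nt_def)
  have h1312: "K 1 3 1 2 = K 1 1 1 1 * Nt 1 3 1 2" by (simp add: g1312 Nt_def)
  have h1313: "K 1 3 1 3 = K 1 1 1 1 * Nt 1 3 1 3" by (simp add: g1313 Nt_def)
  have h1321: "K 1 3 2 1 = K 1 1 1 1 * Nt 1 3 2 1" by (simp add: g1321 Nt_def)
  have h1322: "K 1 3 2 2 = K 1 1 1 1 * Nt 1 3 2 2" by (simp add: g1322 Nt_def)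
  have h1323: "K 1 3 2 3 = K 1 1 1 1 * Nt 1 3 2 3" by (simp add: g1323 Nt_def)
  have h1331: "K 1 3 3 1 = K 1 1 1 1 * Nt 1 3 3 1" by (simp add: g1331 Nt_def)
  have h1332: "K 1 3 3 2 = K 1 1 1 1 * Nt 1 3 3 2" by (simp add: g1332 Nt_def)
  have h1333: "K 1 3 3 3 = K 1 1 1 1 * Nt 1 3 3 3" by (simp add: g1333 Nt_def)
  have h2111: "K 2 1 1 1 = K 1 1 1 1 * Nt 2 1 1 1" by (simp add: g2111 Nt_def)
  have h2112: "K 2 1 1 2 = K 1 1 1 1 * Nt 2 1 1 2" by (simp add: g2112 Nt_def)
  have h2113: "K 2 1 1 3 = K 1 1 1 1 * Nt 2 1 1 3" by (simp add: g2113 Nt_def)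
  have h2121: "K 2 1 2 1 = K 1 1 1 1 * Nt 2 1 2 1" by (simp add: g2121 Nt_def)
  have h2122: "K 2 1 2 2 = K 1 1 1 1 * Nt 2 1 2 2" by (simp add: g2122 Nt_def)
  have h2123: "K 2 1 2 3 = K 1 1 1 1 * Nt 2 1 2 3" by (simp add: g2123 Nt_def)
  have h2131: "K 2 1 3 1 = K 1 1 1 1 * Nt 2 1 3 1" by (simp add: g2131 Nt_def)
  have h2132: "K 2 1 3 2 = K 1 1 1 1 * Nt 2 1 3 2" by (simp add: g2132 Nt_def)
  have h2133: "K 2 1 3 3 = K 1 1 1 1 * Nt 2 1 3 3" by (simp add: g2133 Nt_def)
  have h2211: "K 2 2 1 1 = K 1 1 1 1 * Nt 2 2 1 1" by (simp add: g2211 Nt_def)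
  have h2212: "K 2 2 1 2 = K 1 1 1 1 * Nt 2 2 1 2" by (simp add: g2212 Nt_def)
  have h2213: "K 2 2 1 3 = K 1 1 1 1 * Nt 2 2 1 3" by (simp add: g2213 Nt_def)
  have h2221: "K 2 2 2 1 = K 1 1 1 1 * Nt 2 2 2 1" by (simp add: g2221 Nt_def)
  have h2222: "K 2 2 2 2 = K 1 1 1 1 * Nt 2 2 2 2" by (simp add: g2222 Nt_def)
  have h2223: "K 2 2 2 3 = K 1 1 1 1 * Nt 2 2 2 3" by (simp add: g2223 Nt_def)
  have h2231: "K 2 2 3 1 = K 1 1 1 1 * Nt 2 2 3 1" by (simp add: g2231 Nt_def)
  have h2232: "K 2 2 3 2 = K 1 1 1 1 * Nt 2 2 3 2" by (simp add: g2232 Nt_def)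
  have h2233: "K 2 2 3 3 = K 1 1 1 1 * Nt 2 2 3 3" by (simp add: g2233 Nt_def)
  have h2311: "K 2 3 1 1 = K 1 1 1 1 * Nt 2 3 1 1" by (simp add: g2311 Nt_def)
  have h2312: "K 2 3 1 2 = K 1 1 1 1 * Nt 2 3 1 2" by (simp add: g2312 Nt_def)
  have h2313: "K 2 3 1 3 = K 1 1 1 1 * Nt 2 3 1 3" by (simp add: g2313 Nt_def)
  have h2321: "K 2 3 2 1 = K 1 1 1 1 * Nt 2 3 2 1" by (simp add: g2321 Nt_def)
  have h2322: "K 2 3 2 2 = K 1 1 1 1 * Nt 2 3 2 2" by (simp add: g2322 Nt_def)
  have h2323: "K 2 3 2 3 = K 1 1 1 1 * Nt 2 3 2 3" by (simp add: g2323 Nt_def)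
  have h2331: "K 2 3 3 1 = K 1 1 1 1 * Nt 2 3 3 1" by (simp add: g2331 Nt_def)
  have h2332: "K 2 3 3 2 = K 1 1 1 1 * Nt 2 3 3 2" by (simp add: g2332 Nt_def)
  have h2333: "K 2 3 3 3 = K 1 1 1 1 * Nt 2 3 3 3" by (simp add: g2333 Nt_def)
  have h3111: "K 3 1 1 1 = K 1 1 1 1 * Nt 3 1 1 1" by (simp add: g3111 Nt_def)
  have h3112: "K 3 1 1 2 = K 1 1 1 1 * Nt 3 1 1 2" by (simp add: g3112 Nt_def)
  have h3113: "K 3 1 1 3 = K 1 1 1 1 * Nt 3 1 1 3" by (simp add: g3113 Nt_def)
  have h3121: "K 3 1 2 1 = K 1 1 1 1 * Nt 3 1 2 1" by (simp add: g3121 Nt_def)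
  have h3122: "K 3 1 2 2 = K 1 1 1 1 * Nt 3 1 2 2" by (simp add: g3122 Nt_def)
  have h3123: "K 3 1 2 3 = K 1 1 1 1 * Nt 3 1 2 3" by (simp add: g3123 Nt_def)
  have h3131: "K 3 1 3 1 = K 1 1 1 1 * Nt 3 1 3 1" by (simp add: g3131 Nt_def)
  have h3132: "K 3 1 3 2 = K 1 1 1 1 * Nt 3 1 3 2" by (simp add: g3132 Nt_def)
  have h3133: "K 3 1 3 3 = K 1 1 1 1 * Nt 3 1 3 3" by (simp add: g3133 Nt_def)
  have h3211: "K 3 2 1 1 = K 1 1 1 1 * Nt 3 2 1 1" by (simp add: g3211 Nt_def)
  have h3212: "K 3 2 1 2 = K 1 1 1 1 * Nt 3 2 1 2" by (simp add: g3212 Nt_def)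
  have h3213: "K 3 2 1 3 = K 1 1 1 1 * Nt 3 2 1 3" by (simp add: g3213 Nt_def)
  have h3221: "K 3 2 2 1 = K 1 1 1 1 * Nt 3 2 2 1" by (simp add: g3221 Nt_def)
  have h3222: "K 3 2 2 2 = K 1 1 1 1 * Nt 3 2 2 2" by (simp add: g3222 Nt_def)
  have h3223: "K 3 2 2 3 = K 1 1 1 1 * Nt 3 2 2 3" by (simp add: g3223 Nt_def)
  have h3231: "K 3 2 3 1 = K 1 1 1 1 * Nt 3 2 3 1" by (simp add: g3231 Nt_def)
  have h3232: "K 3 2 3 2 = K 1 1 1 1 * Nt 3 2 3 2" by (simp add: g3232 Nt_def)
  have h3233: "K 3 2 3 3 = K 1 1 1 1 * Nt 3 2 3 3" by (simp add: g3233 Nt_def)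
  have h3311: "K 3 3 1 1 = K 1 1 1 1 * Nt 3 3 1 1" by (simp add: g3311 Nt_def)
  have h3312: "K 3 3 1 2 = K 1 1 1 1 * Nt 3 3 1 2" by (simp add: g3312 Nt_def)
  have h3313: "K 3 3 1 3 = K 1 1 1 1 * Nt 3 3 1 3" by (simp add: g3313 Nt_def)
  have h3321: "K 3 3 2 1 = K 1 1 1 1 * Nt 3 3 2 1" by (simp add: g3321 Nt_def)
  have h3322: "K 3 3 2 2 = K 1 1 1 1 * Nt 3 3 2 2" by (simp add: g3322 Nt_def)
  have h3323: "K 3 3 2 3 = K 1 1 1 1 * Nt 3 3 2 3" by (simp add: g3323 Nt_def)
  have h3331: "K 3 3 3 1 = K 1 1 1 1 * Nt 3 3 3 1" by (simp add: g3331 Nt_def)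
  have h3332: "K 3 3 3 2 = K 1 1 1 1 * Nt 3 3 3 2" by (simp add: g3332 Nt_def)
  have h3333: "K 3 3 3 3 = K 1 1 1 1 * Nt 3 3 3 3" by (simp add: g3333 Nt_def)
  have "\<forall>i j k l. K i j k l = K 1 1 1 1 * Nt i j k l"
    unfolding forall_3 by (intro conjI h1111 h1112 h1113 h1121 h1122 h1123 h1131 h1132 h1133 h1211 h1212 h1213 h1221 h1222 h1223 h1231 h1232 h1233 h1311 h1312 h1313 h1321 h1322 h1323 h1331 h1332 h1333 h2111 h2112 h2113 h2121 h2122 h2123 h2131 h2132 h2133 h2211 h2212 h2213 h2221 h2222 h2223 h2231 h2232 h2233 h2311 h2312 h2313 h2321 h2322 h2323 h2331 h2332 h2333 h3111 h3112 h3113 h3121 h3122 h3123 h3131 h3132 h3133 h3211 h3212 h3213 h3221 h3222 h3223 h3231 h3232 h3233 h3311 h3312 h3313 h3321 h3322 h3323 h3331 h3332 h3333)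
  then show ?thesis by blast
qed


(* from P8.thy *)


lemma eps_vals:
  "eps 1 1 1 = 0" "eps 1 1 2 = 0" "eps 1 1 3 = 0" "eps 1 2 1 = 0" "eps 1 2 2 = 0" "eps 1 2 3 = 1"
  "eps 1 3 1 = 0" "eps 1 3 2 = -1" "eps 1 3 3 = 0"
  "eps 2 1 1 = 0" "eps 2 1 2 = 0" "eps 2 1 3 = -1" "eps 2 2 1 = 0" "eps 2 2 2 = 0" "eps 2 2 3 = 0"
  "eps 2 3 1 = 1" "eps 2 3 2 = 0" "eps 2 3 3 = 0"
  "eps 3 1 1 = 0" "eps 3 1 2 = 1" "eps 3 1 3 = 0" "eps 3 2 1 = -1" "eps 3 2 2 = 0" "eps 3 2 3 = 0"
  "eps 3 3 1 = 0" "eps 3 3 2 = 0" "eps 3 3 3 = 0"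
  by (simp_all add: eps_def det_3 vector_def axis_def)

lemma Nt_vals: "Nt 1 1 1 1 = 1" "Nt 2 2 2 2 = 1" "Nt 3 3 3 3 = 1" by (simp_all add: Nt_def)

lemma trHxa_Nt_comp:
  "trHxa (\<lambda>i j k l. \<delta> * Nt i j k l) b i j k =
     \<delta> * (1/10) * (\<Sum>p\<in>UNIV. \<Sum>q\<in>UNIV. \<Sum>r\<in>UNIV.
      (eps i p q * Nt j k p r + eps j p q * Nt i k p r + eps k p q * Nt i j p r) * b$q$r)"
  by (simp add: trHxa_def sum_distrib_left algebra_simps)

lemma sym_entry: assumes "transpose (b::real^3^3) = b" shows "b$j$i = b$i$j"
proof -
  have "transpose b $ i $ j = b $ i $ j" using assms by simp
  then show ?thesis by (simp add: transpose_def)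
qed

lemma trHxa_Nt:
  assumes "transpose b = b"
  shows "trHxa (\<lambda>i j k l. \<delta> * Nt i j k l) b = (\<lambda>i j k. 0) \<longleftrightarrow>
    \<delta> = 0 \<or> (b$1$2 = 0 \<and> b$1$3 = 0 \<and> b$2$3 = 0)"
proof -
  have sy: "b$2$1 = b$1$2" "b$3$1 = b$1$3" "b$3$2 = b$2$3"
    using sym_entry[OF assms] by blast+
  have c112: "trHxa (\<lambda>i j k l. \<delta> * Nt i j k l) b 1 1 2 = - \<delta> * b$1$3 / 4"
    unfolding trHxa_Nt_comp by (simp add: sum_3 eps_vals Nt_def sy)
  have c113: "trHxa (\<lambda>i j k l. \<delta> * Nt i j k l) b 1 1 3 = \<delta> * b$1$2 / 4"
    unfolding trHxa_Nt_comp by (simp add: sum_3 eps_vals Nt_def sy)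
  have c122: "trHxa (\<lambda>i j k l. \<delta> * Nt i j k l) b 1 2 2 = \<delta> * b$2$3 / 4"
    unfolding trHxa_Nt_comp by (simp add: sum_3 eps_vals Nt_def sy)
  show ?thesis
  proof
    assume "trHxa (\<lambda>i j k l. \<delta> * Nt i j k l) b = (\<lambda>i j k. 0)"
    then have "trHxa (\<lambda>i j k l. \<delta> * Nt i j k l) b 1 1 2 = 0" "trHxa (\<lambda>i j k l. \<delta> * Nt i j k l) b 1 1 3 = 0"
      "trHxa (\<lambda>i j k l. \<delta> * Nt i j k l) b 1 2 2 = 0" by simp_all
    then show "\<delta> = 0 \<or> (b$1$2 = 0 \<and> b$1$3 = 0 \<and> b$2$3 = 0)" using c112 c113 c122 by (simp; blast)
  next
    assume h: "\<delta> = 0 \<or> (b$1$2 = 0 \<and> b$1$3 = 0 \<and> b$2$3 = 0)"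
    show "trHxa (\<lambda>i j k l. \<delta> * Nt i j k l) b = (\<lambda>i j k. 0)"
    proof (intro ext)
      fix i j k :: 3
      show "trHxa (\<lambda>i j k l. \<delta> * Nt i j k l) b i j k = 0"
      proof (cases "\<delta> = 0")
        case True then show ?thesis unfolding trHxa_Nt_comp by simp
      next
        case False
        then have z: "b$1$2 = 0" "b$1$3 = 0" "b$2$3 = 0" "b$2$1 = 0" "b$3$1 = 0" "b$3$2 = 0" using h sy by auto
        have "\<forall>i j k. (\<Sum>p\<in>UNIV. \<Sum>q\<in>UNIV. \<Sum>r\<in>UNIV.
          (eps i p q * Nt j k p r + eps j p q * Nt i k p r + eps k p q * Nt i j p r) * b$q$r) = 0"
          unfolding forall_3 by (intro conjI) (simp_all add: sum_3 eps_vals Nt_def z)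
        then show ?thesis unfolding trHxa_Nt_comp by simp
      qed
    qed
  qed
qed


(* from P9.thy *)


lemma SO3_transpose: "g \<in> SO3 \<Longrightarrow> transpose g \<in> SO3"
  by (simp add: SO3_def)

lemma SO3_mul: "g \<in> SO3 \<Longrightarrow> h \<in> SO3 \<Longrightarrow> g ** h \<in> SO3"
  by (simp add: SO3_def orthogonal_matrix_mul det_mul)

lemma SO3_tg: "g \<in> SO3 \<Longrightarrow> transpose g ** g = mat 1"
  by (simp add: SO3_def orthogonal_matrix_def)

lemma SO3_gt: "g \<in> SO3 \<Longrightarrow> g ** transpose g = mat 1"
  by (simp add: SO3_def orthogonal_matrix_def)

definition r0 :: "real^3^3" where
  "r0 = (\<chi> i j. if i = 1 then (if j = 1 then 3/5 else if j = 2 then -4/5 else 0)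
      else if i = 2 then (if j = 1 then 4/5 else if j = 2 then 3/5 else 0)
      else (if j = 3 then 1 else 0))"

lemma r0_SO3: "r0 \<in> SO3"
  by (simp add: conc_simps r0_def)

lemma r0_not_oct: "r0 \<notin> octahedral"
proof
  assume "r0 \<in> octahedral"
  then have e: "(\<lambda>x. r0 *v x) ` Vc = Vc" by (simp add: octahedral_def cube_rot_group_def V_char)
  have "(\<chi> i. (1::real)) \<in> Vc" by (simp add: Vc_def)
  then have "r0 *v (\<chi> i. (1::real)) \<in> Vc" using e by blast
  then show False by (simp add: Vc_def r0_def matrix_vector_mult_def sum_3 forall_3)
qed

lemma act4_zero: "act4 g (\<lambda>i j k l. 0) = (\<lambda>i j k l. 0)"
  by (simp add: act4_def)

lemma conj_cancel:
  assumes "g \<in> SO3" shows "transpose g ** (g ** x ** transpose g) ** g = x"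
proof -
  have "transpose g ** (g ** x ** transpose g) ** g = (transpose g ** g) ** x ** (transpose g ** g)"
    by (simp add: matrix_mul_assoc)
  then show ?thesis using SO3_tg[OF assms] by simp
qed

lemma K_props:
  assumes g: "g \<in> SO3" and harm: "harmonic4 H"
    and sg: "sym_group4 H = (\<lambda>h. g ** h ** transpose g) ` octahedral"
  defines "K \<equiv> act4 (transpose g) H"
  shows "H = act4 g K" "K = (\<lambda>i j k l. K 1 1 1 1 * Nt i j k l)" "K 1 1 1 1 \<noteq> 0"
proof -
  have gt: "transpose g \<in> SO3" using g by (rule SO3_transpose)
  show HK: "H = act4 g K" unfolding K_def
    by (simp add: act4_comp[symmetric] SO3_gt[OF g] act4_id)
  have inv: "act4 q K = K" if q: "q \<in> octahedral" for q
  proof -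
    have "g ** q ** transpose g \<in> sym_group4 H" using sg q by blast
    then have hinv: "act4 (g ** q ** transpose g) H = H" by (simp add: sym_group4_def)
    have "act4 q K = act4 (q ** transpose g) H" unfolding K_def by (simp add: act4_comp)
    also have "\<dots> = act4 (transpose g ** (g ** q ** transpose g)) H"
    proof -
      have "transpose g ** (g ** q ** transpose g) = (transpose g ** g) ** q ** transpose g"
        by (simp add: matrix_mul_assoc)
      then show ?thesis using SO3_tg[OF g] by simp
    qed
    also have "\<dots> = K" unfolding K_def by (subst act4_comp) (simp only: hinv)
    finally show ?thesis .
  qed
  have symK: "totally_symmetric4 K" unfolding K_def
    using harm by (intro act4_sym) (simp add: harmonic4_def)
  have trK: "traceless4 K" unfolding K_def
    using harm gt by (intro act4_traceless) (simp_all add: harmonic4_def SO3_def)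
  show NF: "K = (\<lambda>i j k l. K 1 1 1 1 * Nt i j k l)"
  proof (rule normal_form)
    show "K i j k l = K j i k l" "K i j k l = K i k j l" "K i j k l = K i j l k" for i j k l
      using symK unfolding totally_symmetric4_def by blast+
    show "(\<Sum>i\<in>UNIV. K i i k l) = 0" for k l using trK unfolding traceless4_def by blast
    show "K i j k l = sz i * sz j * sz k * sz l * K (piz i) (piz j) (piz k) (piz l)" for i j k l
      using inv[OF Rz_oct] act4_sperm[of piz sz K i j k l] by simp
    show "K i j k l = K (pic i) (pic j) (pic k) (pic l)" for i j k l
      using inv[OF C_oct] act4_sperm[of pic "\<lambda>_. 1" K i j k l] by simp
  qed
  show "K 1 1 1 1 \<noteq> 0"
  proof
    assume z: "K 1 1 1 1 = 0"
    have "K = (\<lambda>i j k l. 0 * Nt i j k l)" by (rule NF[unfolded z])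
    then have "K = (\<lambda>i j k l. 0)" by simp
    then have "H = (\<lambda>i j k l. 0)" using HK by (simp add: act4_zero)
    then have "sym_group4 H = SO3" by (auto simp: sym_group4_def act4_zero)
    then have "g ** r0 ** transpose g \<in> (\<lambda>h. g ** h ** transpose g) ` octahedral"
      using sg SO3_mul[OF SO3_mul[OF g r0_SO3] gt] by simp
    then obtain q where q: "q \<in> octahedral" "g ** r0 ** transpose g = g ** q ** transpose g" by blast
    then have "r0 = q" by (metis conj_cancel[OF g])
    then show False using q r0_not_oct by simp
  qed
qed


(* from P10.thy *)


definition diag3 :: "real^3 \<Rightarrow> real^3^3" where
  "diag3 d = (\<chi> i j. if i = j then d$i else 0)"

lemma diag3_sym: "transpose (diag3 d) = diag3 d"
  by (simp add: diag3_def transpose_def vec_eq_iff)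

lemma conj_sym: "transpose b = b \<Longrightarrow> transpose (g ** b ** transpose g) = g ** b ** transpose (g::real^3^3)"
  by (simp add: matrix_transpose_mul matrix_mul_assoc)

lemma S_char:
  assumes g: "g \<in> SO3" and HK: "H = act4 g K" and NF: "K = (\<lambda>i j k l. \<delta> * Nt i j k l)" and d0: "\<delta> \<noteq> 0"
  shows "{a. transpose a = a \<and> trHxa H a = (\<lambda>i j k. 0)} = range (\<lambda>d. g ** diag3 d ** transpose g)"
proof (rule set_eqI, rule iffI)
  fix a assume "a \<in> {a. transpose a = a \<and> trHxa H a = (\<lambda>i j k. 0)}"
  then have as: "transpose a = a" and at: "trHxa H a = (\<lambda>i j k. 0)" by auto
  have gt: "transpose g \<in> SO3" using g by (rule SO3_transpose)
  define b where "b = transpose g ** a ** g"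
  have KH: "act4 (transpose g) H = K"
    unfolding HK by (simp add: act4_comp[symmetric] SO3_tg[OF g] act4_id)
  have "trHxa (act4 (transpose g) H) (transpose g ** a ** transpose (transpose g)) = (\<lambda>i j k. 0)"
    by (rule trHxa_rot[OF gt at])
  then have "trHxa (\<lambda>i j k l. \<delta> * Nt i j k l) b = (\<lambda>i j k. 0)"
    unfolding KH b_def by (simp only: transpose_transpose NF)
  moreover have bs: "transpose b = b"
    unfolding b_def using conj_sym[OF as, of "transpose g"] by simp
  ultimately have z: "b$1$2 = 0" "b$1$3 = 0" "b$2$3 = 0" using trHxa_Nt[OF bs] d0 by auto
  have "b = diag3 (\<chi> i. b$i$i)"
    using z sym_entry[OF bs, of 1 2] sym_entry[OF bs, of 1 3] sym_entry[OF bs, of 2 3]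
    by (simp add: diag3_def vec_eq_iff forall_3)
  moreover have "a = g ** b ** transpose g"
  proof -
    have "g ** b ** transpose g = (g ** transpose g) ** a ** (g ** transpose g)"
      unfolding b_def by (simp add: matrix_mul_assoc)
    then show ?thesis using SO3_gt[OF g] by simp
  qed
  ultimately have "a = g ** diag3 (\<chi> i. b$i$i) ** transpose g" by metis
  then show "a \<in> range (\<lambda>d. g ** diag3 d ** transpose g)" by (rule range_eqI)
next
  fix a assume "a \<in> range (\<lambda>d. g ** diag3 d ** transpose g)"
  then obtain d where a: "a = g ** diag3 d ** transpose g" by auto
  have "trHxa K (diag3 d) = (\<lambda>i j k. 0)"
    unfolding NF by (subst trHxa_Nt[OF diag3_sym]) (simp add: diag3_def)
  then have "trHxa H a = (\<lambda>i j k. 0)" unfolding a HK by (rule trHxa_rot[OF g])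
  moreover have "transpose a = a" unfolding a by (rule conj_sym[OF diag3_sym])
  ultimately show "a \<in> {a. transpose a = a \<and> trHxa H a = (\<lambda>i j k. 0)}" by simp
qed


(* from P11.thy *)


definition fm :: "real^3^3 \<Rightarrow> real^3 \<Rightarrow> real^3^3" where
  "fm g d = g ** diag3 d ** transpose g"

lemma matrix_add_rdistrib3: "(A + B) ** C = A ** C + B ** (C::real^3^3)" for A B :: "real^3^3"
  by (simp add: matrix_matrix_mult_def vec_eq_iff sum.distrib[symmetric] algebra_simps)

lemma fm_linear: "linear (fm g)"
proof (rule linearI)
  have d: "diag3 (x + y) = diag3 x + diag3 y" for x y by (simp add: diag3_def vec_eq_iff)
  show "fm g (x + y) = fm g x + fm g y" for x y
    by (simp add: fm_def d matrix_add_ldistrib matrix_add_rdistrib3)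
  show "fm g (r *\<^sub>R x) = r *\<^sub>R fm g x" for r x
  proof -
    have "diag3 (r *\<^sub>R x) = r *\<^sub>R diag3 x" by (simp add: diag3_def vec_eq_iff)
    then show ?thesis by (simp add: fm_def matrix_scalar_ac scalar_matrix_assoc[symmetric])
  qed
qed

lemma fm_inv: "g \<in> SO3 \<Longrightarrow> transpose g ** fm g d ** g = diag3 d"
  unfolding fm_def by (rule conj_cancel)

lemma fm_inj: "g \<in> SO3 \<Longrightarrow> inj (fm g)"
proof (rule injI)
  fix x y assume g: "g \<in> SO3" and "fm g x = fm g y"
  then have "diag3 x = diag3 y" using fm_inv[OF g] by metis
  then have "diag3 x $ i $ i = diag3 y $ i $ i" for i by simp
  then show "x = y" by (simp add: diag3_def vec_eq_iff)
qed

lemma fm_subspace: "subspace (range (fm g))"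
  by (rule linear_subspace_image[OF fm_linear subspace_UNIV])

lemma fm_dim: "g \<in> SO3 \<Longrightarrow> dim (range (fm g)) = 3"
proof -
  assume g: "g \<in> SO3"
  have "dim (fm g ` UNIV) = dim (UNIV :: (real^3) set)"
    by (rule dim_image_eq[OF fm_linear]) (use fm_inj[OF g] in \<open>simp add: inj_on_def inj_def\<close>)
  then show ?thesis by simp
qed

lemma diag3_mulv: "(diag3 d *v w)$i = d$i * w$i"
  by (simp add: diag3_def matrix_vector_mult_def if_distrib[where f="\<lambda>z. z * _"] cong: if_cong)

lemma SO3_mulv_nz: "g \<in> SO3 \<Longrightarrow> v \<noteq> 0 \<Longrightarrow> g *v v \<noteq> 0"
  by (metis SO3_tg matrix_vector_mul_assoc matrix_vector_mul_lid matrix_vector_mult_0_right)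

lemma eig_fm:
  assumes g: "g \<in> SO3"
  shows "is_eigenvalue (fm g d) c \<longleftrightarrow> c = d$1 \<or> c = d$2 \<or> c = d$3"
proof
  assume "is_eigenvalue (fm g d) c"
  then obtain v where v: "v \<noteq> 0" "fm g d *v v = c *\<^sub>R v" by (auto simp: is_eigenvalue_def)
  define w where "w = transpose g *v v"
  have wnz: "w \<noteq> 0" unfolding w_def using SO3_mulv_nz[OF SO3_transpose[OF g] v(1)] .
  have e1: "(transpose g ** fm g d ** g) ** transpose g = transpose g ** fm g d"
    by (simp add: matrix_mul_assoc[symmetric] SO3_gt[OF g])
  have "transpose g *v (fm g d *v v) = (transpose g ** fm g d ** g) *v w"
    unfolding w_def by (simp only: matrix_vector_mul_assoc e1)
  then have "diag3 d *v w = transpose g *v (fm g d *v v)" by (simp only: fm_inv[OF g])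
  also have "\<dots> = c *\<^sub>R w" unfolding w_def v(2) by (simp add: matrix_vector_mult_scaleR)
  finally have ee: "diag3 d *v w = c *\<^sub>R w" .
  have e: "d$i * w$i = c * w$i" for i
  proof -
    have "(diag3 d *v w)$i = (c *\<^sub>R w)$i" using ee by simp
    then show ?thesis by (simp add: diag3_mulv)
  qed
  obtain k where "w$k \<noteq> 0" using wnz by (auto simp: vec_eq_iff)
  then have "c = d$k" using e[of k] by simp
  then show "c = d$1 \<or> c = d$2 \<or> c = d$3" using exhaust_3[of k] by auto
next
  assume c: "c = d$1 \<or> c = d$2 \<or> c = d$3"
  then obtain k where k: "c = d$k" by blast
  define v where "v = g *v axis k 1"
  have vnz: "v \<noteq> 0" unfolding v_def by (rule SO3_mulv_nz[OF g]) (simp add: axis_eq_0_iff)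
  have "diag3 d *v axis k 1 = c *\<^sub>R axis k 1"
    by (simp add: vec_eq_iff diag3_mulv axis_def k)
  then have "fm g d *v v = c *\<^sub>R v"
  proof -
    have fg: "fm g d ** g = g ** diag3 d" unfolding fm_def by (simp add: matrix_mul_assoc[symmetric] SO3_tg[OF g])
    have "fm g d *v v = (fm g d ** g) *v axis k 1" unfolding v_def by (simp only: matrix_vector_mul_assoc)
    also have "\<dots> = g *v (diag3 d *v axis k 1)" by (simp only: fg matrix_vector_mul_assoc)
    also have "\<dots> = c *\<^sub>R v" unfolding v_def by (simp only: \<open>diag3 d *v axis k 1 = c *\<^sub>R axis k 1\<close> matrix_vector_mult_scaleR)
    finally show ?thesis .
  qed
  then show "is_eigenvalue (fm g d) c" using vnz by (auto simp: is_eigenvalue_def)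
qed

lemma orth_fm:
  assumes g: "g \<in> SO3"
  shows "orthotropic2 (fm g d) \<longleftrightarrow> d$1 \<noteq> d$2 \<and> d$1 \<noteq> d$3 \<and> d$2 \<noteq> d$3"
proof -
  have "{c. is_eigenvalue (fm g d) c} = {d$1, d$2, d$3}" using eig_fm[OF g] by auto
  moreover have "transpose (fm g d) = fm g d" unfolding fm_def by (rule conj_sym[OF diag3_sym])
  ultimately show ?thesis unfolding orthotropic2_def by (auto simp: card_insert_if)
qed


(* from P12.thy *)


lemma fm_add: "fm g (x + y) = fm g x + fm g y" by (rule linear_add[OF fm_linear])
lemma fm_scale: "fm g (r *\<^sub>R x) = r *\<^sub>R fm g x" by (rule linear_scale[OF fm_linear])

lemma phi_cont: fixes g :: "real^3^3" shows "continuous_on UNIV (\<lambda>a::real^3^3. (transpose g ** a ** g)$i$i)"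
proof -
  have "linear (\<lambda>a::real^3^3. (transpose g ** a ** g)$i$i)"
  proof (rule linearI)
    show "(transpose g ** (x + y) ** g)$i$i = (transpose g ** x ** g)$i$i + (transpose g ** y ** g)$i$i" for x y
      by (simp add: matrix_add_ldistrib matrix_add_rdistrib3)
    show "(transpose g ** (r *\<^sub>R x) ** g)$i$i = r *\<^sub>R (transpose g ** x ** g)$i$i" for r x
      by (simp add: matrix_scalar_ac scalar_matrix_assoc[symmetric])
  qed
  then show ?thesis by (intro linear_continuous_on) (simp add: linear_conv_bounded_linear)
qed

lemma phi_fm: "g \<in> SO3 \<Longrightarrow> (transpose g ** fm g d ** g)$i$i = d$i"
  by (simp add: fm_inv diag3_def)

lemma open_part:
  assumes g: "g \<in> SO3"
  shows "openin (top_of_set (range (fm g))) {a \<in> range (fm g). orthotropic2 a}"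
proof -
  define \<phi> where "\<phi> i a = (transpose g ** a ** g)$i$i" for i a
  define U where "U = {a. \<phi> 1 a \<noteq> \<phi> 2 a} \<inter> {a. \<phi> 1 a \<noteq> \<phi> 3 a} \<inter> {a. \<phi> 2 a \<noteq> \<phi> 3 a}"
  have c: "continuous_on UNIV (\<phi> i)" for i unfolding \<phi>_def[abs_def] by (rule phi_cont)
  have "open U" unfolding U_def by (intro open_Int open_Collect_neq c)
  moreover have "{a \<in> range (fm g). orthotropic2 a} = range (fm g) \<inter> U"
    unfolding U_def \<phi>_def using orth_fm[OF g] phi_fm[OF g] by auto
  ultimately show ?thesis unfolding openin_open by blast
qed

lemma dense_part:
  assumes g: "g \<in> SO3"
  shows "range (fm g) \<subseteq> closure {a \<in> range (fm g). orthotropic2 a}"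
proof
  fix a assume "a \<in> range (fm g)"
  then obtain d where a: "a = fm g d" by auto
  define w :: "real^3" where "w = (\<chi> i. if i = 1 then 0 else if i = 2 then 1 else 2)"
  show "a \<in> closure {a \<in> range (fm g). orthotropic2 a}"
    unfolding closure_approachable
  proof (intro allI impI)
    fix e :: real assume e: "e > 0"
    define e' where "e' = e / (norm (fm g w) + 1)"
    have np: "norm (fm g w) + 1 > 0" using norm_ge_zero[of "fm g w"] by linarith
    have e': "e' > 0" unfolding e'_def using e np by (rule divide_pos_pos)
    have "infinite ({0<..<e'} - {d$1 - d$2, (d$1 - d$3)/2, d$2 - d$3})"
      using e' by (intro Diff_infinite_finite) auto
    then obtain t where t: "t \<in> {0<..<e'}" "t \<notin> {d$1 - d$2, (d$1 - d$3)/2, d$2 - d$3}"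
      by (metis infinite_imp_nonempty ex_in_conv DiffE)
    define d' where "d' = d + t *\<^sub>R w"
    have "orthotropic2 (fm g d')" unfolding orth_fm[OF g] d'_def w_def using t
      by (auto simp: field_simps)
    then have "fm g d' \<in> {a \<in> range (fm g). orthotropic2 a}" by auto
    moreover have "dist (fm g d') a < e"
    proof -
      have "dist (fm g d') a = norm (t *\<^sub>R fm g w)"
        unfolding a d'_def dist_norm fm_add fm_scale by simp
      also have "\<dots> = t * norm (fm g w)" using t by simp
      also have "\<dots> < e"
      proof -
        have "t * norm (fm g w) \<le> t * (norm (fm g w) + 1)" using t by simp
        also have "\<dots> < e' * (norm (fm g w) + 1)"
          using t np by (intro mult_strict_right_mono) auto
        also have "\<dots> = e" unfolding e'_def using np by simp
        finally show ?thesis .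
      qed
      finally show ?thesis .
    qed
    ultimately show "\<exists>y\<in>{a \<in> range (fm g). orthotropic2 a}. dist y a < e" by blast
  qed
qed


(* from P13.thy *)


declare transpose_matrix_vector [simp del]

lemma mult_if10: "(x::real) * (if P then 1 else 0) = (if P then x else 0)" by simp

lemma ortho_complete:
  fixes u :: "3 \<Rightarrow> real^3"
  assumes on: "\<forall>i j. u i \<bullet> u j = (if i = j then 1 else 0)"
  shows "v = (\<Sum>i\<in>UNIV. (v \<bullet> u i) *\<^sub>R u i)"
proof -
  define U :: "real^3^3" where "U = (\<chi> i. u i)"
  have "U ** transpose U = mat 1"
    using on by (simp add: U_def matrix_matrix_mult_def transpose_def mat_def vec_eq_iff inner_vec_def)
  then have "transpose U ** U = mat 1" by (simp add: matrix_left_right_inverse)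
  then have "v = transpose U *v (U *v v)" by (simp add: matrix_vector_mul_assoc)
  also have "\<dots> = (\<Sum>i\<in>UNIV. (v \<bullet> u i) *\<^sub>R u i)"
    by (simp add: U_def vec_eq_iff matrix_vector_mult_def transpose_def inner_vec_def sum_component mult_ac)
  finally show ?thesis .
qed

lemma cube_char:
  fixes u :: "3 \<Rightarrow> real^3"
  assumes on: "\<forall>i j. u i \<bullet> u j = (if i = j then 1 else 0)"
  shows "cube_vertices u = {v. \<forall>i. v \<bullet> u i = 1 \<or> v \<bullet> u i = -1}"
proof (rule set_eqI, rule iffI)
  fix v assume "v \<in> cube_vertices u"
  then obtain s where s: "\<forall>i. s i = 1 \<or> s i = -1" and v: "v = (\<Sum>i\<in>UNIV. s i *\<^sub>R u i)"
    unfolding cube_vertices_def by blast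
  have "v \<bullet> u i = s i" for i
  proof -
    have "v \<bullet> u i = (\<Sum>j\<in>UNIV. s j * (u j \<bullet> u i))" unfolding v by (simp add: inner_sum_left)
    also have "\<dots> = (\<Sum>j\<in>UNIV. if j = i then s j else 0)" using on by (intro sum.cong) simp_all
    also have "\<dots> = s i" by simp
    finally show ?thesis .
  qed
  then show "v \<in> {v. \<forall>i. v \<bullet> u i = 1 \<or> v \<bullet> u i = -1}" using s by simp
next
  fix v assume "v \<in> {v. \<forall>i. v \<bullet> u i = 1 \<or> v \<bullet> u i = -1}"
  then have "\<forall>i. v \<bullet> u i = 1 \<or> v \<bullet> u i = -1" by simp
  moreover have "v = (\<Sum>i\<in>UNIV. (v \<bullet> u i) *\<^sub>R u i)" by (rule ortho_complete[OF on])
  ultimately show "v \<in> cube_vertices u" unfolding cube_vertices_def mem_Collect_eq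
    by (intro exI[of _ "\<lambda>i. v \<bullet> u i"] conjI)
qed

lemma col_axis: "(g *v axis k 1)$p = (g::real^3^3)$p$k"
  by (simp add: matrix_vector_mult_def axis_def mult_if10)

lemma tg_comp: "(transpose g *v v)$k = v \<bullet> ((g::real^3^3) *v axis k 1)"
  unfolding inner_vec_def col_axis by (simp add: matrix_vector_mult_def transpose_def mult_ac)

lemma col_unit: "g \<in> SO3 \<Longrightarrow> (g *v axis k 1) \<bullet> (g *v axis k 1) = 1"
  by (simp add: inner_vec_def col_axis orth_col[OF SO3_orth])

lemma gVc:
  assumes g: "g \<in> SO3"
  shows "(\<lambda>x. g *v x) ` Vc = {v. \<forall>k. v \<bullet> (g *v axis k 1) = 1 \<or> v \<bullet> (g *v axis k 1) = -1}"
proof (rule set_eqI, rule iffI)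
  fix v assume "v \<in> (\<lambda>x. g *v x) ` Vc"
  then obtain x where x: "x \<in> Vc" "v = g *v x" by auto
  have "transpose g *v v = x" unfolding x(2) by (simp add: matrix_vector_mul_assoc SO3_tg[OF g])
  then show "v \<in> {v. \<forall>k. v \<bullet> (g *v axis k 1) = 1 \<or> v \<bullet> (g *v axis k 1) = -1}"
    using x(1) by (auto simp: Vc_def tg_comp[symmetric])
next
  fix v assume "v \<in> {v. \<forall>k. v \<bullet> (g *v axis k 1) = 1 \<or> v \<bullet> (g *v axis k 1) = -1}"
  then have "transpose g *v v \<in> Vc" unfolding Vc_def mem_Collect_eq tg_comp by blast
  moreover have "v = g *v (transpose g *v v)" by (simp add: matrix_vector_mul_assoc SO3_gt[OF g])
  ultimately show "v \<in> (\<lambda>x. g *v x) ` Vc" by blast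
qed

lemma rot_group_gVc:
  assumes g: "g \<in> SO3" and cv: "cube_vertices u = (\<lambda>x. g *v x) ` Vc"
  shows "cube_rot_group u = (\<lambda>h. g ** h ** transpose g) ` octahedral"
proof (rule set_eqI, rule iffI)
  fix h assume "h \<in> cube_rot_group u"
  then have h: "h \<in> SO3" "(\<lambda>x. h *v x) ` ((\<lambda>x. g *v x) ` Vc) = (\<lambda>x. g *v x) ` Vc"
    unfolding cube_rot_group_def cv by auto
  define q where "q = transpose g ** h ** g"
  have qS: "q \<in> SO3" unfolding q_def by (intro SO3_mul SO3_transpose g h(1))
  have "(\<lambda>x. q *v x) ` Vc = (\<lambda>x. transpose g *v x) ` ((\<lambda>x. h *v x) ` ((\<lambda>x. g *v x) ` Vc))"
    unfolding q_def by (simp only: image_image matrix_vector_mul_assoc matrix_mul_assoc)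
  also have "\<dots> = (\<lambda>x. transpose g *v x) ` ((\<lambda>x. g *v x) ` Vc)" using h(2) by simp
  also have "\<dots> = Vc" by (simp add: image_image matrix_vector_mul_assoc SO3_tg[OF g])
  finally have "q \<in> octahedral" using qS by (simp add: octahedral_def cube_rot_group_def V_char)
  moreover have "h = g ** q ** transpose g"
  proof -
    have "g ** q ** transpose g = (g ** transpose g) ** h ** (g ** transpose g)"
      unfolding q_def by (simp add: matrix_mul_assoc)
    then show ?thesis using SO3_gt[OF g] by simp
  qed
  ultimately show "h \<in> (\<lambda>h. g ** h ** transpose g) ` octahedral" by blast
next
  fix h assume "h \<in> (\<lambda>h. g ** h ** transpose g) ` octahedral"
  then obtain q where q: "q \<in> octahedral" "h = g ** q ** transpose g" by auto
  have qS: "q \<in> SO3" and qV: "(\<lambda>x. q *v x) ` Vc = Vc"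
    using q(1) by (auto simp: octahedral_def cube_rot_group_def V_char)
  have hS: "h \<in> SO3" unfolding q(2) by (intro SO3_mul SO3_transpose g qS)
  have hg: "h ** g = g ** q"
  proof -
    have "h ** g = g ** q ** (transpose g ** g)" unfolding q(2) by (simp add: matrix_mul_assoc)
    then show ?thesis using SO3_tg[OF g] by simp
  qed
  have "(\<lambda>x. h *v x) ` ((\<lambda>x. g *v x) ` Vc) = (\<lambda>x. g *v x) ` ((\<lambda>x. q *v x) ` Vc)"
    by (simp add: image_image matrix_vector_mul_assoc hg)
  also have "\<dots> = (\<lambda>x. g *v x) ` Vc" using qV by simp
  finally show "h \<in> cube_rot_group u" unfolding cube_rot_group_def cv using hS by simp
qed


(* from P14.thy *)


lemma col_orth: "g \<in> SO3 \<Longrightarrow> (g *v axis k 1) \<bullet> (g *v axis j 1) = (if k = j then 1 else 0)"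
  unfolding inner_vec_def col_axis inner_real_def by (rule orth_col[OF SO3_orth])

lemma eig_struct:
  assumes g: "g \<in> SO3" and dd: "d$1 \<noteq> d$2" "d$1 \<noteq> d$3" "d$2 \<noteq> d$3"
    and ev: "fm g d *v v = c *\<^sub>R v" and nv: "v \<bullet> v = 1"
  shows "\<exists>k s. (s = 1 \<or> s = -1) \<and> v = s *\<^sub>R (g *v axis k 1)"
proof -
  define w where "w = transpose g *v v"
  have vnz: "v \<noteq> 0" using nv by auto
  have wnz: "w \<noteq> 0" unfolding w_def using SO3_mulv_nz[OF SO3_transpose[OF g] vnz] .
  have e1: "(transpose g ** fm g d ** g) ** transpose g = transpose g ** fm g d"
    by (simp add: matrix_mul_assoc[symmetric] SO3_gt[OF g])
  have "transpose g *v (fm g d *v v) = (transpose g ** fm g d ** g) *v w"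
    unfolding w_def by (simp only: matrix_vector_mul_assoc e1)
  then have "diag3 d *v w = transpose g *v (fm g d *v v)" by (simp only: fm_inv[OF g])
  also have "\<dots> = c *\<^sub>R w" unfolding w_def ev by (simp add: matrix_vector_mult_scaleR)
  finally have ee: "diag3 d *v w = c *\<^sub>R w" .
  have e: "d$i * w$i = c * w$i" for i
  proof -
    have "(diag3 d *v w)$i = (c *\<^sub>R w)$i" using ee by simp
    then show ?thesis by (simp add: diag3_mulv)
  qed
  obtain k where wk: "w$k \<noteq> 0" using wnz by (auto simp: vec_eq_iff)
  then have ck: "c = d$k" using e[of k] by simp
  have dne: "d$j \<noteq> d$k" if "j \<noteq> k" for j
    using dd that exhaust_3[of j] exhaust_3[of k] by auto
  have wj: "w$j = 0" if "j \<noteq> k" for j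
    using e[of j] dne[OF that] ck by auto
  have wax: "w = w$k *\<^sub>R axis k 1"
    using wj by (auto simp: vec_eq_iff axis_def)
  have "v = g *v w" unfolding w_def by (simp add: matrix_vector_mul_assoc SO3_gt[OF g])
  then have vk: "v = w$k *\<^sub>R (g *v axis k 1)"
    by (metis wax matrix_vector_mult_scaleR)
  have "1 = (w$k *\<^sub>R (g *v axis k 1)) \<bullet> (w$k *\<^sub>R (g *v axis k 1))" using nv vk by simp
  also have "\<dots> = w$k * w$k" using col_orth[OF g, of k k] by simp
  finally have "(w$k - 1) * (w$k + 1) = 0" by algebra
  then have "w$k = 1 \<or> w$k = -1" by auto
  then show ?thesis using vk by blast
qed

lemma cv_u:
  assumes g: "g \<in> SO3" and dd: "d$1 \<noteq> d$2" "d$1 \<noteq> d$3" "d$2 \<noteq> d$3"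
    and nb: "natural_basis2 (fm g d) u"
  shows "cube_vertices u = (\<lambda>x. g *v x) ` Vc"
proof -
  have on: "\<forall>i j. u i \<bullet> u j = (if i = j then 1 else 0)"
    using nb by (simp add: natural_basis2_def direct_orthonormal_basis_def)
  have "\<forall>i. \<exists>k s. (s = 1 \<or> s = -1) \<and> u i = s *\<^sub>R (g *v axis k 1)"
  proof
    fix i
    obtain c where "fm g d *v u i = c *\<^sub>R u i" using nb by (auto simp: natural_basis2_def)
    moreover have "u i \<bullet> u i = 1" using on by simp
    ultimately show "\<exists>k s. (s = 1 \<or> s = -1) \<and> u i = s *\<^sub>R (g *v axis k 1)"
      by (rule eig_struct[OF g dd])
  qed
  then obtain \<sigma> where "\<forall>i. \<exists>s. (s = 1 \<or> s = -1) \<and> u i = s *\<^sub>R (g *v axis (\<sigma> i) 1)"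
    using choice[of "\<lambda>i k. \<exists>s. (s = 1 \<or> s = -1) \<and> u i = s *\<^sub>R (g *v axis k 1)"] by blast
  then obtain s where s: "\<forall>i. (s i = 1 \<or> s i = -1) \<and> u i = s i *\<^sub>R (g *v axis (\<sigma> i) 1)"
    using choice[of "\<lambda>i s. (s = 1 \<or> s = -1) \<and> u i = s *\<^sub>R (g *v axis (\<sigma> i) 1)"] by blast
  have ss: "s i * s i = 1" for i using s by (metis mult_1 mult_minus_left mult_minus_right minus_minus)
  have "inj \<sigma>"
  proof (rule injI)
    fix i j assume eq: "\<sigma> i = \<sigma> j"
    show "i = j"
    proof (rule ccontr)
      assume "i \<noteq> j"
      then have "u i \<bullet> u j = 0" using on by simp
      moreover have "u i \<bullet> u j = s i * s j" using s col_orth[OF g, of "\<sigma> i" "\<sigma> j"] eq by simp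
      ultimately show False using s by (metis mult_eq_0_iff zero_neq_one neg_equal_0_iff_equal one_neq_zero)
    qed
  qed
  then have surj: "surj \<sigma>" by (simp add: finite_UNIV_inj_surj)
  have ip: "v \<bullet> u i = s i * (v \<bullet> (g *v axis (\<sigma> i) 1))" for v i using s by simp
  have "{v. \<forall>i. v \<bullet> u i = 1 \<or> v \<bullet> u i = -1} = {v. \<forall>k. v \<bullet> (g *v axis k 1) = 1 \<or> v \<bullet> (g *v axis k 1) = -1}"
  proof (rule set_eqI, rule iffI)
    fix v assume "v \<in> {v. \<forall>i. v \<bullet> u i = 1 \<or> v \<bullet> u i = -1}"
    then have h: "\<forall>i. v \<bullet> u i = 1 \<or> v \<bullet> u i = -1" by simp
    show "v \<in> {v. \<forall>k. v \<bullet> (g *v axis k 1) = 1 \<or> v \<bullet> (g *v axis k 1) = -1}"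
    proof (intro CollectI allI)
      fix k
      obtain i where k: "k = \<sigma> i" using surj by (metis surjD)
      have "v \<bullet> (g *v axis k 1) = s i * (v \<bullet> u i)" unfolding k ip using ss[of i] by (simp add: mult.assoc[symmetric])
      then show "v \<bullet> (g *v axis k 1) = 1 \<or> v \<bullet> (g *v axis k 1) = -1" using h[rule_format, of i] s by auto
    qed
  next
    fix v assume "v \<in> {v. \<forall>k. v \<bullet> (g *v axis k 1) = 1 \<or> v \<bullet> (g *v axis k 1) = -1}"
    then have h: "\<forall>k. v \<bullet> (g *v axis k 1) = 1 \<or> v \<bullet> (g *v axis k 1) = -1" by simp
    show "v \<in> {v. \<forall>i. v \<bullet> u i = 1 \<or> v \<bullet> u i = -1}"
      using h s unfolding mem_Collect_eq ip by (metis mult_1 mult_minus_left mult_minus_right minus_minus mult_1_right)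
  qed
  then show ?thesis unfolding cube_char[OF on] gVc[OF g] .
qed

lemma nb_final:
  assumes g: "g \<in> SO3" and sg: "sym_group4 H = (\<lambda>h. g ** h ** transpose g) ` octahedral"
    and orth: "orthotropic2 (fm g d)" and nb: "natural_basis2 (fm g d) u"
  shows "natural_basis4 H u"
proof -
  have dd: "d$1 \<noteq> d$2" "d$1 \<noteq> d$3" "d$2 \<noteq> d$3" using orth orth_fm[OF g] by auto
  show ?thesis unfolding natural_basis4_def
    using nb rot_group_gVc[OF g cv_u[OF g dd nb]] sg by (simp add: natural_basis2_def)
qed


(* from P15.thy *)


theorem mainTheorem1:
  fixes H :: tensor4
  assumes "harmonic4 H" and "cubic4 H"
  defines "S \<equiv> {a :: real^3^3. transpose a = a \<and> trHxa H a = (\<lambda>i j k. 0)}"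
  shows "subspace S \<and> dim S = 3
    \<and> openin (top_of_set S) {a \<in> S. orthotropic2 a}
    \<and> S \<subseteq> closure {a \<in> S. orthotropic2 a}
    \<and> (\<forall>a \<in> S. orthotropic2 a \<longrightarrow> (\<forall>u. natural_basis2 a u \<longrightarrow> natural_basis4 H u))"
proof -
  obtain g where g: "g \<in> SO3" and sg: "sym_group4 H = (\<lambda>h. g ** h ** transpose g) ` octahedral"
    using assms(2) unfolding cubic4_def by blast
  note KP = K_props[OF g assms(1) sg]
  have "S = range (\<lambda>d. g ** diag3 d ** transpose g)"
    unfolding S_def by (rule S_char[OF g KP(1) KP(2) KP(3)])
  also have "(\<lambda>d. g ** diag3 d ** transpose g) = fm g" by (simp add: fm_def[abs_def])
  finally have S: "S = range (fm g)" .
  have nb: "\<forall>a \<in> S. orthotropic2 a \<longrightarrow> (\<forall>u. natural_basis2 a u \<longrightarrow> natural_basis4 H u)"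
    unfolding S using nb_final[OF g sg] by blast
  show ?thesis unfolding S
    using fm_subspace[of g] fm_dim[OF g] open_part[OF g] dense_part[OF g] nb[unfolded S] by blast
qed


end
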